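(* Under the hypotheses of the following setting: $q$ a prime power, $\epsilon>0$, $p\ge2$ an integer, $m\le n$ positive integers, $Z$ a random vector in $\mathbb{F}_q^n$, $\mathcal{C}$ uniform over the set $\mathscr{C}$ of all $[n,n-m]_q$ linear codes with parity-check matrix $H$ (an $m\times n$ rank-$m$ matrix with kernel $\mathcal{C}$), and $m\le H_p(Z)-p-\log_q(1/\epsilon)$, we have $$\mathbb{E}_{\mathcal{C}\sim\mathscr{C}}\big[D_p(P_{HZ}\|P_{U_m})\big]\le\frac{p\,\epsilon}{(p-1)\ln q}$$ and $$\mathbb{E}_{\mathcal{C}\sim\mathscr{C}}\big\|q^mP_{HZ}-1\big\|_p\le 2^{1-1/p}\big((1+\epsilon)^p-1\big)^{1/p}.$$
   Context: $H_p(Z)=\frac{1}{1-p}\log_q\sum_xP_Z(x)^p$. $D_p(P\|Q)=\frac{1}{p-1}\log_q\sum_xP(x)^pQ(x)^{-(p-1)}$. $P_{U_m}$ is the uniform distribution on $\mathbb{F}_q^m$; $P_{HZ}$ is the distribution of $HZ$ for fixed $\mathcal{C}$. For $f:\mathbb{F}_q^m\to\mathbb{R}$, $\|f\|_p=\big(q^{-m}\sum_x|f(x)|^p\big)^{1/p}$. *)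

theory Defs
  imports "HOL-Probability.Probability"
begin

text \<open>Linear codes of length n = CARD('n) and dimension n - m over the finite field 'a,
  i.e. subspaces of 'a^'n with q^(n-m) elements, q = CARD('a).\<close>
definition linear_codes :: "nat \<Rightarrow> ('a::{finite,field} ^ 'n) set set" where
  "linear_codes m = {C. (0::'a^'n) \<in> C \<and> (\<forall>x\<in>C. \<forall>y\<in>C. x + y \<in> C)
      \<and> (\<forall>c::'a. \<forall>x\<in>C. (\<chi> i. c * x $ i) \<in> C)
      \<and> card C = CARD('a) ^ (CARD('n) - m)}"

definition is_parity_check :: "('a::{finite,field}) ^ 'n ^ 'm \<Rightarrow> ('a ^ 'n) set \<Rightarrow> bool" where
  "is_parity_check H C \<longleftrightarrow> range (\<lambda>x. H *v x) = UNIV \<and> {x. H *v x = 0} = C"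

definition parity_check :: "('a::{finite,field} ^ 'n) set \<Rightarrow> 'a ^ 'n ^ 'm" where
  "parity_check C = (SOME H. is_parity_check H C)"

definition renyi_entropy :: "real \<Rightarrow> real \<Rightarrow> 'b::finite pmf \<Rightarrow> real" where
  "renyi_entropy q p Z = 1 / (1 - p) * log q (\<Sum>x\<in>UNIV. pmf Z x powr p)"

definition renyi_div :: "real \<Rightarrow> real \<Rightarrow> 'b::finite pmf \<Rightarrow> 'b pmf \<Rightarrow> real" where
  "renyi_div q p P Q = 1 / (p - 1) * log q (\<Sum>x\<in>UNIV. pmf P x powr p * pmf Q x powr (-(p - 1)))"

definition pnorm :: "real \<Rightarrow> ('b::finite \<Rightarrow> real) \<Rightarrow> real" where
  "pnorm p f = ((1 / real CARD('b)) * (\<Sum>x\<in>UNIV. \<bar>f x\<bar> powr p)) powr (1 / p)"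

definition syndrome_dist :: "('a::{finite,field}) ^ 'n ^ 'm \<Rightarrow> ('a ^ 'n) pmf \<Rightarrow> ('a ^ 'm) pmf" where
  "syndrome_dist H Z = map_pmf (\<lambda>z. H *v z) Z"

end

theory Submission
  imports Defs
begin


lemma tangent_powr:
  fixes a th :: real
  assumes "0 \<le> a" "0 < th" "th \<le> 1"
  shows "a powr th \<le> th * a + (1 - th)"
proof (cases "a = 0")
  case True then show ?thesis using assms by simp
next
  case False
  show ?thesis
  proof (cases "th = 1")
    case True then show ?thesis using assms by simp
  next
    case False
    have "a powr th * 1 powr (1 - th) \<le> th * a + (1 - th) * 1"
      using assms \<open>a \<noteq> 0\<close> False by (intro Youngs_inequality_0) auto
    then show ?thesis by simp
  qed
qed

lemma young_nat:
  fixes x y :: real and t :: nat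
  assumes "0 \<le> x" "0 \<le> y"
  shows "x * y ^ t \<le> (x ^ (t+1) + real t * y ^ (t+1)) / real (t+1)"
proof (cases "x = 0 \<or> y = 0 \<or> t = 0")
  case True
  then consider "x = 0" | "y = 0" "t > 0" | "t = 0" by auto
  then show ?thesis
  proof cases
    case 1 then show ?thesis using assms by (simp add: zero_le_power)
  next
    case 2 then show ?thesis using assms by (simp add: zero_le_power zero_power)
  next
    case 3 then show ?thesis by simp
  qed
next
  case False
  then have x: "x > 0" and y: "y > 0" and t: "t > 0" using assms by auto
  have "(x ^ (t+1)) powr (1 / real (t+1)) * (y ^ (t+1)) powr (real t / real (t+1))
        \<le> (1 / real (t+1)) * x ^ (t+1) + (real t / real (t+1)) * y ^ (t+1)"
    using x y t by (intro Youngs_inequality_0) (auto simp: field_simps)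
  moreover have "(x ^ (t+1)) powr (1 / real (t+1)) = x"
  proof -
    have "(x ^ (t+1)) powr (1 / real (t+1)) = (x powr real (t+1)) powr (1 / real (t+1))"
      using x by (simp only: powr_realpow)
    also have "\<dots> = x powr (real (t+1) * (1 / real (t+1)))" by (simp only: powr_powr)
    also have "\<dots> = x" using x by simp
    finally show ?thesis .
  qed
  moreover have "(y ^ (t+1)) powr (real t / real (t+1)) = y ^ t"
  proof -
    have "(y ^ (t+1)) powr (real t / real (t+1)) = (y powr real (t+1)) powr (real t / real (t+1))"
      using y by (simp only: powr_realpow)
    also have "\<dots> = y powr (real (t+1) * (real t / real (t+1)))" by (simp only: powr_powr)
    also have "\<dots> = y powr (real t)" by simp
    also have "\<dots> = y ^ t" using y by (simp add: powr_realpow)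
    finally show ?thesis .
  qed
  ultimately have "x * y ^ t \<le> (1 / real (t+1)) * x ^ (t+1) + (real t / real (t+1)) * y ^ (t+1)"
    by (metis (no_types, lifting))
  also have "\<dots> = (x ^ (t+1) + real t * y ^ (t+1)) / real (t+1)"
    by (simp only: add_divide_distrib) simp
  finally show ?thesis .
qed

lemma chebyshev_pow:
  fixes f :: "'b \<Rightarrow> real"
  assumes "finite S" "\<And>x. x \<in> S \<Longrightarrow> f x \<ge> 0"
  shows "(\<Sum>x\<in>S. f x) * (\<Sum>x\<in>S. f x ^ t) \<le> real (card S) * (\<Sum>x\<in>S. f x ^ (Suc t))"
proof -
  have nn: "0 \<le> (\<Sum>i\<in>S. \<Sum>j\<in>S. (f i - f j) * (f i ^ t - f j ^ t))"
  proof (intro sum_nonneg)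
    fix i j assume "i \<in> S" "j \<in> S"
    then have "f i \<ge> 0" "f j \<ge> 0" using assms by auto
    show "0 \<le> (f i - f j) * (f i ^ t - f j ^ t)"
    proof (cases "f i \<le> f j")
      case True
      then have "f i ^ t \<le> f j ^ t" using \<open>f i \<ge> 0\<close> by (simp add: power_mono)
      then show ?thesis using True by (simp add: mult_nonpos_nonpos)
    next
      case False
      then have "f j ^ t \<le> f i ^ t" using \<open>f j \<ge> 0\<close> by (simp add: power_mono)
      then show ?thesis using False by simp
    qed
  qed
  have "(\<Sum>i\<in>S. \<Sum>j\<in>S. (f i - f j) * (f i ^ t - f j ^ t))
      = (\<Sum>i\<in>S. \<Sum>j\<in>S. f i ^ Suc t + f j ^ Suc t - f i * f j ^ t - f j * f i ^ t)"
    by (intro sum.cong refl) (simp add: algebra_simps)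
  also have "\<dots> = 2 * (real (card S) * (\<Sum>x\<in>S. f x ^ (Suc t))) - 2 * ((\<Sum>x\<in>S. f x) * (\<Sum>x\<in>S. f x ^ t))"
    by (simp add: sum.distrib sum_subtractf sum_distrib_left sum_distrib_right
        sum.swap[of "\<lambda>i j. f j * f i ^ t"] algebra_simps)
  finally show ?thesis using nn by simp
qed

lemma power_mean_sum:
  fixes f :: "'b \<Rightarrow> real"
  assumes "finite S" "\<And>x. x \<in> S \<Longrightarrow> f x \<ge> 0" "t \<ge> 1"
  shows "(\<Sum>x\<in>S. f x) ^ t \<le> real (card S) ^ (t - 1) * (\<Sum>x\<in>S. f x ^ t)"
  using assms(3)
proof (induction t rule: dec_induct)
  case base then show ?case by simp
next
  case (step t)
  have s0: "0 \<le> (\<Sum>x\<in>S. f x)" using assms by (simp add: sum_nonneg)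
  have "(\<Sum>x\<in>S. f x) ^ Suc t = (\<Sum>x\<in>S. f x) * (\<Sum>x\<in>S. f x) ^ t" by simp
  also have "\<dots> \<le> (\<Sum>x\<in>S. f x) * (real (card S) ^ (t - 1) * (\<Sum>x\<in>S. f x ^ t))"
    using step.IH s0 by (intro mult_left_mono) auto
  also have "\<dots> = real (card S) ^ (t - 1) * ((\<Sum>x\<in>S. f x) * (\<Sum>x\<in>S. f x ^ t))" by simp
  also have "\<dots> \<le> real (card S) ^ (t - 1) * (real (card S) * (\<Sum>x\<in>S. f x ^ (Suc t)))"
    using chebyshev_pow[OF assms(1,2)] by (intro mult_left_mono) auto
  also have "\<dots> = real (card S) ^ (Suc t - 1) * (\<Sum>x\<in>S. f x ^ (Suc t))"
    using step.hyps by (cases t) auto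
  finally show ?case .
qed

lemma sum_PiE_insert:
  assumes "finite A" "k \<notin> A"
  shows "(\<Sum>z\<in>PiE (insert k A) (\<lambda>_. UNIV::'c::finite set). h z)
       = (\<Sum>v\<in>UNIV. \<Sum>x\<in>PiE A (\<lambda>_. UNIV). h (x(k := v)))"
proof -
  have "(\<Sum>z\<in>PiE (insert k A) (\<lambda>_. UNIV::'c set). h z)
      = (\<Sum>(v,x)\<in>UNIV \<times> PiE A (\<lambda>_. UNIV). h (x(k := v)))"
    using assms
    by (intro sum.reindex_bij_witness[of _ "\<lambda>(y,g). g(k := y)" "\<lambda>g. (g k, g(k := undefined))"])
       (auto simp: PiE_def extensional_def)
  also have "\<dots> = (\<Sum>v\<in>UNIV. \<Sum>x\<in>PiE A (\<lambda>_. UNIV). h (x(k := v)))"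
    by (subst sum.cartesian_product) auto
  finally show ?thesis .
qed

lemma sum_PiE_split:
  assumes "finite A" "finite B" "A \<inter> B = {}"
  shows "(\<Sum>z\<in>PiE (A \<union> B) (\<lambda>_. UNIV::'c::finite set). h z)
       = (\<Sum>x\<in>PiE A (\<lambda>_. UNIV). \<Sum>y\<in>PiE B (\<lambda>_. UNIV). h (\<lambda>i. if i \<in> A then x i else y i))"
proof -
  have mr: "(\<lambda>i. if i \<in> A then restrict a A i else restrict a B i) = a"
    if "a \<in> PiE (A \<union> B) (\<lambda>_. UNIV::'c set)" for a
    using that by (auto simp: fun_eq_iff PiE_def extensional_def)
  have "(\<Sum>z\<in>PiE (A \<union> B) (\<lambda>_. UNIV::'c set). h z)
      = (\<Sum>(x,y)\<in>PiE A (\<lambda>_. UNIV) \<times> PiE B (\<lambda>_. UNIV). h (\<lambda>i. if i \<in> A then x i else y i))"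
    using assms
    by (intro sum.reindex_bij_witness[of _ "\<lambda>(x,y). (\<lambda>i. if i \<in> A then x i else y i)" "\<lambda>z. (restrict z A, restrict z B)"])
       (auto simp: mr, auto simp: PiE_def extensional_def fun_eq_iff)
  also have "\<dots> = (\<Sum>x\<in>PiE A (\<lambda>_. UNIV). \<Sum>y\<in>PiE B (\<lambda>_. UNIV). h (\<lambda>i. if i \<in> A then x i else y i))"
    by (subst sum.cartesian_product) auto
  finally show ?thesis .
qed


lemma lc_iff:
  "(C \<in> (linear_codes k :: ('a::{finite,field}^'n) set set)) \<longleftrightarrow>
     vec.subspace C \<and> card C = CARD('a) ^ (CARD('n) - k)"
  unfolding linear_codes_def vec.subspace_def by (auto simp: vector_scalar_mult_def)

lemma card_span_indep:
  fixes B :: "('a::{finite,field}^'n) set"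
  assumes "vec.independent B"
  shows "card (vec.span B) = CARD('a) ^ card B"
proof -
  have fB: "finite B" using assms vec.finiteI_independent by blast
  let ?F = "\<lambda>u. \<Sum>v\<in>B. u v *s v"
  have sp: "vec.span B = ?F ` (PiE B (\<lambda>_. UNIV))"
  proof -
    have "range ?F = ?F ` (PiE B (\<lambda>_. UNIV))"
    proof
      show "range ?F \<subseteq> ?F ` (PiE B (\<lambda>_. UNIV))"
      proof
        fix x assume "x \<in> range ?F"
        then obtain u where x: "x = ?F u" by auto
        have "x = ?F (restrict u B)" unfolding x by (intro sum.cong) auto
        moreover have "restrict u B \<in> PiE B (\<lambda>_. UNIV)" by auto
        ultimately show "x \<in> ?F ` (PiE B (\<lambda>_. UNIV))" by blast
      qed
    qed auto
    then show ?thesis using vec.span_finite[OF fB] by simp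
  qed
  have inj: "inj_on ?F (PiE B (\<lambda>_. UNIV))"
  proof (rule inj_onI)
    fix u u' assume u: "u \<in> PiE B (\<lambda>_. UNIV)" and u': "u' \<in> PiE B (\<lambda>_. UNIV)"
      and eq: "?F u = ?F u'"
    have "(\<Sum>v\<in>B. (u v - u' v) *s v) = ?F u - ?F u'"
      by (simp add: sum_subtractf vector_sub_rdistrib)
    also have "\<dots> = 0" using eq by simp
    finally have z: "(\<Sum>v\<in>B. (u v - u' v) *s v) = 0" .
    have ind: "\<forall>c. (\<Sum>v\<in>B. c v *s v) = 0 \<longrightarrow> (\<forall>v\<in>B. c v = 0)"
      using assms vec.independent_explicit by blast
    have "\<forall>v\<in>B. u v - u' v = 0" using ind[rule_format, OF z] by blast
    then show "u = u'" using u u' by (auto simp: PiE_def extensional_def fun_eq_iff)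
  qed
  have "card (vec.span B) = card (PiE B (\<lambda>_. UNIV::'a set))"
    unfolding sp using card_image[OF inj] by simp
  also have "\<dots> = CARD('a) ^ card B" using fB by (simp add: card_PiE)
  finally show ?thesis .
qed

lemma card_subspace_dim:
  fixes S :: "('a::{finite,field}^'n) set"
  assumes "vec.subspace S"
  obtains B where "vec.independent B" "vec.span B = S" "card B = vec.dim S"
    "card S = CARD('a) ^ vec.dim S"
proof -
  obtain B where B: "B \<subseteq> S" "vec.independent B" "S \<subseteq> vec.span B" "card B = vec.dim S"
    using vec.basis_exists by blast
  have "vec.span B = S" using B assms vec.span_subspace by blast
  then show ?thesis using that B card_span_indep[OF B(2)] by auto
qed

lemma q_ge2: "CARD('a::{finite,field}) \<ge> 2"
proof -
  have "card {0::'a, 1} = 2" by simp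
  moreover have "card {0::'a, 1} \<le> CARD('a)" by (rule card_mono) auto
  ultimately show ?thesis by simp
qed

lemma parity_check_exists:
  fixes C :: "('a::{finite,field}^'n) set"
  assumes C: "C \<in> linear_codes CARD('m::finite)" and mn: "CARD('m) \<le> CARD('n)"
  shows "\<exists>H :: 'a^'n^'m. is_parity_check H C"
proof -
  let ?q = "CARD('a)" and ?m = "CARD('m)" and ?n = "CARD('n)"
  have sub: "vec.subspace C" and cardC: "card C = ?q ^ (?n - ?m)" using C lc_iff by blast+
  obtain B where B: "vec.independent B" "vec.span B = C" "card C = ?q ^ vec.dim C" "card B = vec.dim C"
    using card_subspace_dim[OF sub] by metis
  have q2: "?q \<ge> 2" by (rule q_ge2)
  have "vec.dim C = ?n - ?m"
    using B(3) cardC q2 by (simp add: power_inject_exp)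
  then have cB: "card B = ?n - ?m" using B(4) by simp
  define E where "E = vec.extend_basis B"
  have E: "B \<subseteq> E" "vec.independent E" "vec.span E = UNIV"
    unfolding E_def using B(1) vec.extend_basis_superset vec.independent_extend_basis vec.span_extend_basis
    by auto
  have fE: "finite E" using E(2) vec.finiteI_independent by blast
  have cE: "card E = ?n"
    using vec.basis_card_eq_dim[of E UNIV] E vec.dim_UNIV card_cart_basis by auto
  have ccm: "card (cart_basis :: ('a^'m) set) = ?m" by (rule card_cart_basis)
  have cEB: "card (E - B) = card (cart_basis :: ('a^'m) set)"
    using cE cB E(1) fE ccm mn by (simp add: card_Diff_subset finite_subset)
  obtain h where h: "bij_betw h (E - B) (cart_basis :: ('a^'m) set)"
    using finite_same_card_bij[OF _ _ cEB] fE finite_cart_basis by blast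
  define f where "f = (\<lambda>b. if b \<in> B then 0 else h b)"
  define g :: "'a^'n \<Rightarrow> 'a^'m" where "g = vec.construct E f"
  have lin: "Vector_Spaces.linear (*s) (*s) g" unfolding g_def by (rule vec.linear_construct[OF E(2)])
  have gE: "\<And>b. b \<in> E \<Longrightarrow> g b = f b" unfolding g_def by (rule vec.construct_basis[OF E(2)])
  have "cart_basis \<subseteq> f ` E"
  proof
    fix y :: "'a^'m" assume "y \<in> cart_basis"
    then have "y \<in> h ` (E - B)" using h by (simp add: bij_betw_def)
    then obtain b where "b \<in> E - B" "h b = y" by blast
    then show "y \<in> f ` E" unfolding f_def by force
  qed
  then have "vec.span (cart_basis :: ('a^'m) set) \<subseteq> vec.span (f ` E)" by (rule vec.span_mono)
  then have surj: "range g = UNIV"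
    unfolding g_def vec.range_construct_eq_span[OF E(2)] by auto
  have kerC: "C \<subseteq> {x. g x = 0}"
  proof -
    have "vec.subspace {x. g x = 0}" using vec.linear_subspace_kernel[OF lin] .
    moreover have "B \<subseteq> {x. g x = 0}" using gE E(1) by (auto simp: f_def)
    ultimately show ?thesis using vec.span_minimal B(2) by blast
  qed
  have fib: "card {x. g x = y} = card {x. g x = 0}" for y
  proof -
    obtain x0 where x0: "g x0 = y" using surj by (metis UNIV_I image_iff)
    have "{x. g x = y} = (\<lambda>k. k + x0) ` {x. g x = 0}"
    proof (rule set_eqI, rule iffI)
      fix x assume "x \<in> {x. g x = y}"
      then have "g (x - x0) = 0" using x0 vec.linear_diff[OF lin] by simp
      then show "x \<in> (\<lambda>k. k + x0) ` {x. g x = 0}" by (intro image_eqI[of _ _ "x - x0"]) auto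
    next
      fix x assume "x \<in> (\<lambda>k. k + x0) ` {x. g x = 0}"
      then obtain k where "g k = 0" "x = k + x0" by auto
      then show "x \<in> {x. g x = y}" using vec.linear_add[OF lin] x0 by simp
    qed
    moreover have "inj_on (\<lambda>k. k + x0) {x. g x = 0}" by (auto simp: inj_on_def)
    ultimately show ?thesis by (simp add: card_image)
  qed
  have c1: "(\<Sum>y\<in>(UNIV :: ('a^'m) set). if g x = y then 1 else 0) = (1::nat)" for x
    by (simp add: sum.delta')
  have c2: "card {x. g x = y} = (\<Sum>x\<in>(UNIV :: ('a^'n) set). if g x = y then 1 else (0::nat))" for y
    by (simp add: sum.If_cases)
  have "?q ^ ?n = card (UNIV :: ('a^'n) set)" by (simp only: CARD_vec)
  also have "\<dots> = (\<Sum>x\<in>(UNIV :: ('a^'n) set). \<Sum>y\<in>(UNIV :: ('a^'m) set). if g x = y then 1 else 0)"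
    by (simp only: c1 card_eq_sum)
  also have "\<dots> = (\<Sum>y\<in>(UNIV :: ('a^'m) set). card {x. g x = y})"
    by (subst sum.swap) (simp only: c2)
  also have "\<dots> = (\<Sum>y\<in>(UNIV :: ('a^'m) set). card {x. g x = 0})" by (intro sum.cong refl fib)
  also have "\<dots> = ?q ^ ?m * card {x. g x = 0}" by (simp only: sum_constant CARD_vec of_nat_id)
  finally have "?q ^ ?m * card {x. g x = 0} = ?q ^ ?m * ?q ^ (?n - ?m)"
    using mn by (simp add: power_add[symmetric])
  then have "card {x. g x = 0} = card C" using q2 cardC by simp
  then have ker: "{x. g x = 0} = C" using kerC by (intro card_subset_eq[symmetric]) auto
  have "is_parity_check (matrix g) C"
    unfolding is_parity_check_def matrix_works[OF lin] using surj ker by simp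
  then show ?thesis by blast
qed


lemma double_count:
  assumes "finite A" "finite B"
  shows "(\<Sum>x\<in>A. card {y\<in>B. R x y}) = (\<Sum>y\<in>B. card {x\<in>A. R x y})"
proof -
  have "(\<Sum>x\<in>A. card {y\<in>B. R x y}) = (\<Sum>x\<in>A. \<Sum>y\<in>B. if R x y then 1 else (0::nat))"
    using assms by (intro sum.cong refl) (simp add: sum.If_cases Int_def conj_commute)
  also have "\<dots> = (\<Sum>y\<in>B. \<Sum>x\<in>A. if R x y then 1 else (0::nat))" by (rule sum.swap)
  also have "\<dots> = (\<Sum>y\<in>B. card {x\<in>A. R x y})"
    using assms by (intro sum.cong refl) (simp add: sum.If_cases Int_def conj_commute)
  finally show ?thesis .
qed

lemma finite_lc: "finite (linear_codes k :: ('a::{finite,field}^'n) set set)"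
  by (rule finite_subset[of _ "Pow UNIV"]) auto

lemma code_sym:
  fixes W :: "('a::{finite,field}^'n) set"
  assumes W: "vec.subspace W" and v: "v \<notin> W" and w: "w \<notin> W"
  shows "card {C \<in> linear_codes k. W \<subseteq> C \<and> v \<in> C} \<le> card {C \<in> linear_codes k. W \<subseteq> C \<and> w \<in> C}"
proof -
  obtain B where B: "vec.independent B" "vec.span B = W"
    using card_subspace_dim[OF W] by metis
  have BW: "B \<subseteq> W" using B(2) vec.span_superset by blast
  have vB: "v \<notin> B" and wB: "w \<notin> B" using BW v w by auto
  have iv: "vec.independent (insert v B)" using B v by (intro vec.independent_insertI) auto
  have iw: "vec.independent (insert w B)" using B w by (intro vec.independent_insertI) auto
  define E1 where "E1 = vec.extend_basis (insert v B)"
  define E2 where "E2 = vec.extend_basis (insert w B)"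
  have E1: "insert v B \<subseteq> E1" "vec.independent E1" "vec.span E1 = UNIV"
    unfolding E1_def using iv vec.extend_basis_superset vec.independent_extend_basis vec.span_extend_basis
    by auto
  have E2: "insert w B \<subseteq> E2" "vec.independent E2" "vec.span E2 = UNIV"
    unfolding E2_def using iw vec.extend_basis_superset vec.independent_extend_basis vec.span_extend_basis
    by auto
  have fE1: "finite E1" using E1(2) vec.finiteI_independent by blast
  have fE2: "finite E2" using E2(2) vec.finiteI_independent by blast
  have cE1: "card E1 = vec.dim (UNIV :: ('a^'n) set)" using vec.basis_card_eq_dim[of E1 UNIV] E1 by auto
  have cE2: "card E2 = vec.dim (UNIV :: ('a^'n) set)" using vec.basis_card_eq_dim[of E2 UNIV] E2 by auto
  have fB: "finite B" using B(1) vec.finiteI_independent by blast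
  have "card (E1 - insert v B) = card (E2 - insert w B)"
    using cE1 cE2 E1(1) E2(1) fE1 fE2 fB vB wB by (simp add: card_Diff_subset finite_subset)
  then obtain h0 where h0: "bij_betw h0 (E1 - insert v B) (E2 - insert w B)"
    using finite_same_card_bij[of "E1 - insert v B" "E2 - insert w B"] fE1 fE2 by auto
  define f where "f = (\<lambda>b. if b \<in> B then b else if b = v then w else h0 b)"
  define g :: "'a^'n \<Rightarrow> 'a^'n" where "g = vec.construct E1 f"
  have lin: "Vector_Spaces.linear (*s) (*s) g" unfolding g_def by (rule vec.linear_construct[OF E1(2)])
  have gE: "\<And>b. b \<in> E1 \<Longrightarrow> g b = f b" unfolding g_def by (rule vec.construct_basis[OF E1(2)])
  have "E2 \<subseteq> f ` E1"
  proof
    fix y assume y: "y \<in> E2"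
    show "y \<in> f ` E1"
    proof (cases "y \<in> insert w B")
      case True
      then show ?thesis
      proof
        assume "y = w" then show ?thesis using E1(1) vB unfolding f_def by (intro image_eqI[of _ _ v]) auto
      next
        assume "y \<in> B" then show ?thesis using E1(1) unfolding f_def by (intro image_eqI[of _ _ y]) auto
      qed
    next
      case False
      then have "y \<in> h0 ` (E1 - insert v B)" using y h0 by (simp add: bij_betw_def)
      then obtain b where b: "b \<in> E1 - insert v B" "h0 b = y" by blast
      then show ?thesis unfolding f_def by (intro image_eqI[of _ _ b]) auto
    qed
  qed
  then have "vec.span E2 \<subseteq> vec.span (f ` E1)" by (rule vec.span_mono)
  then have surj: "surj g"
    unfolding g_def vec.range_construct_eq_span[OF E1(2)] using E2(3) by auto
  have inj: "inj g" using finite_UNIV_surj_inj[OF _ surj] by simp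
  have gfix: "g x = x" if "x \<in> W" for x
  proof -
    have gB: "\<And>b. b \<in> B \<Longrightarrow> g b = mat 1 *v b" using gE E1(1) by (auto simp: f_def)
    have xB: "x \<in> vec.span B" using that B(2) by simp
    have "g x = mat 1 *v x"
      by (rule vec.linear_eq_on[OF lin matrix_vector_mul_linear_gen xB gB])
    then show ?thesis by simp
  qed
  have gv: "g v = w" using gE[of v] E1(1) vB unfolding f_def by auto
  let ?A = "{C \<in> linear_codes k. W \<subseteq> C \<and> v \<in> C}"
  let ?B = "{C \<in> linear_codes k. W \<subseteq> C \<and> w \<in> C} :: ('a^'n) set set"
  have "inj_on (image g) ?A" using inj by (auto simp: inj_on_def inj_image_eq_iff)
  moreover have "image g ` ?A \<subseteq> ?B"
  proof
    fix D assume "D \<in> image g ` ?A"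
    then obtain C where C: "C \<in> linear_codes k" "W \<subseteq> C" "v \<in> C" and D: "D = g ` C" by blast
    have "vec.subspace C" "card C = CARD('a) ^ (CARD('n) - k)" using C(1) lc_iff by blast+
    then have "vec.subspace D" "card D = CARD('a) ^ (CARD('n) - k)"
      using vec.linear_subspace_image[OF lin] D card_image[of g C] inj
      by (auto simp: inj_on_def inj_def)
    then have "D \<in> linear_codes k" using lc_iff by blast
    moreover have "W \<subseteq> D" using C(2) gfix D by force
    moreover have "w \<in> D" using C(3) gv D by force
    ultimately show "D \<in> ?B" by blast
  qed
  moreover have "finite ?B" using finite_lc by auto
  ultimately show ?thesis by (rule card_inj_on_le)
qed

lemma code_count:
  fixes W :: "('a::{finite,field}^'n) set"
  assumes W: "vec.subspace W" and w: "w \<notin> W" and k: "k \<le> CARD('n)"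
  shows "CARD('a) ^ k * card {C \<in> linear_codes k. W \<subseteq> C \<and> w \<in> C}
          \<le> card {C \<in> linear_codes k. W \<subseteq> C}"
proof -
  let ?q = "CARD('a)" and ?n = "CARD('n)"
  let ?LW = "{C \<in> linear_codes k. W \<subseteq> C} :: ('a^'n) set set"
  define Nw where "Nw = card {C \<in> ?LW. w \<in> C}"
  have eqw: "{C \<in> linear_codes k. W \<subseteq> C \<and> w \<in> C} = {C \<in> ?LW. w \<in> C}" by auto
  have Nv: "card {C \<in> ?LW. v \<in> C} = Nw" if "v \<notin> W" for v
  proof -
    have "{C \<in> ?LW. v \<in> C} = {C \<in> linear_codes k. W \<subseteq> C \<and> v \<in> C}" by auto
    then show ?thesis unfolding Nw_def eqw[symmetric]
      using code_sym[OF W that w, of k] code_sym[OF W w that, of k] by simp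
  qed
  have fLW: "finite ?LW" using finite_lc by auto
  have cW: "card W < ?q ^ ?n"
  proof -
    have "W \<subset> UNIV" using w by auto
    then have "card W < card (UNIV :: ('a^'n) set)" by (intro psubset_card_mono) auto
    then show ?thesis by (simp only: CARD_vec)
  qed
  have "(\<Sum>v\<in>-W. card {C \<in> ?LW. v \<in> C}) = (\<Sum>C\<in>?LW. card {v \<in> -W. v \<in> C})"
    using fLW by (intro double_count) auto
  also have "\<dots> = (\<Sum>C\<in>?LW. ?q ^ (?n - k) - card W)"
  proof (intro sum.cong refl)
    fix C assume C: "C \<in> ?LW"
    have "{v \<in> -W. v \<in> C} = C - W" by auto
    then show "card {v \<in> -W. v \<in> C} = ?q ^ (?n - k) - card W"
      using C lc_iff[of C k] by (simp add: card_Diff_subset finite_subset)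
  qed
  finally have eq1: "card (-W) * Nw = card ?LW * (?q ^ (?n - k) - card W)"
    using Nv by simp
  have cc: "card (-W) = ?q ^ ?n - card W"
  proof -
    have "-W = UNIV - W" by auto
    then have "card (-W) = card (UNIV :: ('a^'n) set) - card W" by (simp add: card_Diff_subset)
    then show ?thesis by (simp only: CARD_vec)
  qed
  have "?q ^ k * Nw * (?q ^ ?n - card W) = card ?LW * (?q ^ k * (?q ^ (?n - k) - card W))"
    using eq1 cc by (simp add: ac_simps)
  also have "?q ^ k * (?q ^ (?n - k) - card W) = ?q ^ ?n - ?q ^ k * card W"
    using k by (simp add: right_diff_distrib' power_add[symmetric])
  also have "\<dots> \<le> ?q ^ ?n - card W"
  proof -
    have "1 \<le> ?q ^ k" by simp
    then have "card W \<le> ?q ^ k * card W" by simp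
    then show ?thesis by (rule diff_le_mono2)
  qed
  finally have "?q ^ k * Nw * (?q ^ ?n - card W) \<le> card ?LW * (?q ^ ?n - card W)"
    by (simp add: mult_left_mono)
  then have "?q ^ k * Nw \<le> card ?LW" using cW by simp
  then show ?thesis unfolding Nw_def eqw .
qed


lemma lc_span_sub:
  assumes "C \<in> linear_codes k"
  shows "(\<forall>x\<in>S. x \<in> C) \<longleftrightarrow> vec.span S \<subseteq> C"
proof
  have sub: "vec.subspace C" using assms lc_iff by blast
  assume "\<forall>x\<in>S. x \<in> C"
  then have "S \<subseteq> C" by blast
  then show "vec.span S \<subseteq> C" using sub by (rule vec.span_minimal)
next
  assume "vec.span S \<subseteq> C"
  then show "\<forall>x\<in>S. x \<in> C" using vec.span_superset by blast
qed

lemma count_seq: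
  fixes d :: "nat \<Rightarrow> 'a::{finite,field}^'n"
  assumes k: "k \<le> CARD('n)"
  shows "real (card {C \<in> linear_codes k. \<forall>i<j. d i \<in> C})
          * (\<Prod>i<j. if d i \<in> vec.span (d ` {..<i}) then 1 else real CARD('a) ^ k)
         \<le> real (card (linear_codes k :: ('a^'n) set set))"
proof (induction j)
  case 0
  have "{C \<in> linear_codes k. \<forall>i<0. d i \<in> C} = (linear_codes k :: ('a^'n) set set)" by blast
  then show ?case by (simp only: prod.empty mult_1_right lessThan_0)
next
  case (Suc j)
  let ?W = "vec.span (d ` {..<j})"
  let ?f = "\<lambda>i. if d i \<in> vec.span (d ` {..<i}) then 1 else real CARD('a) ^ k"
  let ?S0 = "{C \<in> linear_codes k. \<forall>i<j. d i \<in> C} :: ('a^'n) set set"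
  let ?S1 = "{C \<in> linear_codes k. \<forall>i<Suc j. d i \<in> C} :: ('a^'n) set set"
  have key: "(\<forall>i<j. d i \<in> C) \<longleftrightarrow> ?W \<subseteq> C" if "C \<in> linear_codes k" for C
  proof -
    have "(\<forall>i<j. d i \<in> C) \<longleftrightarrow> (\<forall>x\<in>d ` {..<j}. x \<in> C)" by auto
    then show ?thesis using lc_span_sub[OF that, of "d ` {..<j}"] by simp
  qed
  have suc: "(\<forall>i<Suc j. d i \<in> C) \<longleftrightarrow> (\<forall>i<j. d i \<in> C) \<and> d j \<in> C" for C
    by (metis less_Suc_eq)
  have e1: "?S0 = {C \<in> linear_codes k. ?W \<subseteq> C}"
    by (rule Collect_cong) (use key in auto)
  have e2: "?S1 = {C \<in> linear_codes k. ?W \<subseteq> C \<and> d j \<in> C}"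
    by (rule Collect_cong) (use key suc in auto)
  have fpos: "0 \<le> (\<Prod>i<j. ?f i)" by (intro prod_nonneg) auto
  have prodS: "(\<Prod>i<Suc j. ?f i) = (\<Prod>i<j. ?f i) * ?f j" by (rule prod.lessThan_Suc)
  show ?case
  proof (cases "d j \<in> ?W")
    case True
    have "?S1 = ?S0" unfolding e1 e2 using True by blast
    moreover have "?f j = 1" using True by (simp only: if_P if_True)
    ultimately show ?thesis using Suc.IH by (simp only: prodS mult_1_right)
  next
    case False
    have fj: "?f j = real CARD('a) ^ k" using False by (simp only: if_not_P if_False)
    have "real (CARD('a) ^ k * card {C \<in> linear_codes k. ?W \<subseteq> C \<and> d j \<in> C})
        \<le> real (card {C \<in> linear_codes k. ?W \<subseteq> C})"
      using code_count[OF vec.subspace_span False k] by (simp only: of_nat_le_iff)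
    then have "real (card ?S1) * real CARD('a) ^ k \<le> real (card ?S0)"
      unfolding e1 e2 by (simp only: of_nat_mult of_nat_power mult.commute)
    then have "real (card ?S1) * real CARD('a) ^ k * (\<Prod>i<j. ?f i) \<le> real (card ?S0) * (\<Prod>i<j. ?f i)"
      using fpos by (rule mult_right_mono)
    also have "\<dots> \<le> real (card (linear_codes k :: ('a^'n) set set))" by (rule Suc.IH)
    finally show ?thesis by (simp only: prodS fj mult.assoc mult.commute[of "real CARD('a) ^ k"])
  qed
qed

lemma greedy:
  fixes d :: "nat \<Rightarrow> 'a::{finite,field}^'n"
  assumes T: "T \<subseteq> {..<p}" and old: "\<forall>i\<in>T. d i \<in> vec.span (d ` {..<i})"
  shows "\<forall>i\<in>T. d i \<in> vec.span (d ` ({..<p} - T))"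
proof -
  have "i \<in> T \<longrightarrow> d i \<in> vec.span (d ` ({..<p} - T))" for i
  proof (induction i rule: less_induct)
    case (less i)
    show ?case
    proof
      assume iT: "i \<in> T"
      have "d ` {..<i} \<subseteq> vec.span (d ` ({..<p} - T))"
      proof
        fix x assume "x \<in> d ` {..<i}"
        then obtain j where j: "j < i" "x = d j" by auto
        show "x \<in> vec.span (d ` ({..<p} - T))"
        proof (cases "j \<in> T")
          case True then show ?thesis using less j by blast
        next
          case False
          then have "j \<in> {..<p} - T" using j iT T by auto
          then show ?thesis using j by (auto intro: vec.span_base)
        qed
      qed
      then have "vec.span (d ` {..<i}) \<subseteq> vec.span (d ` ({..<p} - T))"
        by (intro vec.span_minimal) auto
      then show "d i \<in> vec.span (d ` ({..<p} - T))" using old iT by blast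
    qed
  qed
  then show ?thesis by blast
qed

lemma span_combos:
  fixes g :: "nat \<Rightarrow> 'a::{finite,field}^'n"
  assumes "finite U"
  shows "vec.span (g ` U) \<subseteq> (\<lambda>c. \<Sum>j\<in>U. c j *s g j) ` PiE U (\<lambda>_. UNIV)"
proof (rule vec.span_minimal)
  let ?R = "(\<lambda>c. \<Sum>j\<in>U. c j *s g j) ` PiE U (\<lambda>_. UNIV)"
  show "g ` U \<subseteq> ?R"
  proof
    fix x assume "x \<in> g ` U"
    then obtain j where j: "j \<in> U" "x = g j" by auto
    have "(\<Sum>i\<in>U. (\<lambda>i\<in>U. if i = j then 1 else 0) i *s g i) = (\<Sum>i\<in>U. if i = j then g i else 0)"
      by (intro sum.cong) auto
    also have "\<dots> = g j" using j assms by simp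
    finally show "x \<in> ?R" using j by (intro image_eqI[of _ _ "\<lambda>i\<in>U. if i = j then 1 else 0"]) auto
  qed
  show "vec.subspace ?R"
    unfolding vec.subspace_def
  proof (intro conjI ballI allI)
    show "0 \<in> ?R" by (intro image_eqI[of _ _ "\<lambda>i\<in>U. 0"]) auto
  next
    fix x y assume "x \<in> ?R" "y \<in> ?R"
    then obtain c1 c2 where c: "c1 \<in> PiE U (\<lambda>_. UNIV)" "c2 \<in> PiE U (\<lambda>_. UNIV)"
      "x = (\<Sum>j\<in>U. c1 j *s g j)" "y = (\<Sum>j\<in>U. c2 j *s g j)" by auto
    have "x + y = (\<Sum>j\<in>U. (\<lambda>i\<in>U. c1 i + c2 i) j *s g j)"
      unfolding c by (simp add: sum.distrib[symmetric] vec.scale_left_distrib)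
    then show "x + y \<in> ?R" by (intro image_eqI[of _ _ "\<lambda>i\<in>U. c1 i + c2 i"]) auto
  next
    fix a x assume "x \<in> ?R"
    then obtain c1 where c: "c1 \<in> PiE U (\<lambda>_. UNIV)" "x = (\<Sum>j\<in>U. c1 j *s g j)" by auto
    have "a *s x = (\<Sum>j\<in>U. (\<lambda>i\<in>U. a * c1 i) j *s g j)"
      unfolding c by (simp add: vec.scale_sum_right)
    then show "a *s x \<in> ?R" by (intro image_eqI[of _ _ "\<lambda>i\<in>U. a * c1 i"]) auto
  qed
qed

lemma sum_PiE_prod_one:
  fixes P :: "'c::finite \<Rightarrow> real"
  assumes "finite A" "(\<Sum>y\<in>UNIV. P y) = 1"
  shows "(\<Sum>x\<in>PiE A (\<lambda>_. UNIV). \<Prod>i\<in>A. P (x i)) = 1"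
  using prod_sum_PiE[OF assms(1), of "\<lambda>_. UNIV" "\<lambda>_ y. P y"] assms by simp

lemma reindex_affine:
  fixes Q :: "'a::{finite,field}^'n \<Rightarrow> real"
  assumes "a \<noteq> 0"
  shows "(\<Sum>v\<in>UNIV. Q (a *s v + r)) = (\<Sum>v\<in>UNIV. Q v)"
proof -
  have inj: "inj (\<lambda>v. a *s v + r)"
    using assms by (auto simp: inj_def)
  then have "surj (\<lambda>v. a *s v + r)" using finite_UNIV_inj_surj[OF _ inj] by simp
  then have "(\<Sum>v\<in>UNIV. Q v) = (\<Sum>v\<in>range (\<lambda>v. a *s v + r). Q v)" by simp
  also have "\<dots> = (\<Sum>v\<in>UNIV. Q (a *s v + r))" using sum.reindex[OF inj] by simp
  finally show ?thesis by simp
qed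

lemma SV:
  fixes P :: "'a::{finite,field}^'n \<Rightarrow> real" and F :: "(nat \<Rightarrow> 'a^'n) \<Rightarrow> 'a^'n"
  assumes P0: "\<forall>y. P y \<ge> 0" and P1: "(\<Sum>y\<in>UNIV. P y) = 1"
    and A: "finite A" "k \<notin> A" and a: "a \<noteq> 0"
    and F: "\<And>x v. F (x(k := v)) = a *s v + R x"
  shows "(\<Sum>z\<in>PiE (insert k A) (\<lambda>_. UNIV). (\<Prod>i\<in>insert k A. P (z i)) * P (F z) ^ t)
         \<le> (\<Sum>y\<in>UNIV. P y ^ (t+1))"
proof -
  let ?M = "\<Sum>y\<in>UNIV. P y ^ (t+1)"
  have inner: "(\<Sum>v\<in>UNIV. P v * P (a *s v + r) ^ t) \<le> ?M" for r
  proof -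
    have "(\<Sum>v\<in>UNIV. P v * P (a *s v + r) ^ t)
        \<le> (\<Sum>v\<in>UNIV. (P v ^ (t+1) + real t * P (a *s v + r) ^ (t+1)) / real (t+1))"
      using P0 by (intro sum_mono young_nat) auto
    also have "\<dots> = ((\<Sum>v\<in>UNIV. P v ^ (t+1)) + real t * (\<Sum>v\<in>UNIV. P (a *s v + r) ^ (t+1))) / real (t+1)"
      by (simp add: sum_divide_distrib[symmetric] sum.distrib sum_distrib_left)
    also have "(\<Sum>v\<in>UNIV. P (a *s v + r) ^ (t+1)) = ?M"
      using reindex_affine[OF a, of "\<lambda>v. P v ^ (t+1)"] by simp
    also have "(?M + real t * ?M) / real (t+1) = ?M" by (simp add: field_simps)
    finally show ?thesis .
  qed
  have "(\<Sum>z\<in>PiE (insert k A) (\<lambda>_. UNIV). (\<Prod>i\<in>insert k A. P (z i)) * P (F z) ^ t)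
      = (\<Sum>v\<in>UNIV. \<Sum>x\<in>PiE A (\<lambda>_. UNIV). (\<Prod>i\<in>insert k A. P ((x(k := v)) i)) * P (F (x(k := v))) ^ t)"
    by (rule sum_PiE_insert[OF A])
  also have "\<dots> = (\<Sum>v\<in>UNIV. \<Sum>x\<in>PiE A (\<lambda>_. UNIV). (\<Prod>i\<in>A. P (x i)) * (P v * P (a *s v + R x) ^ t))"
  proof (intro sum.cong refl)
    fix v x
    have "(\<Prod>i\<in>insert k A. P ((x(k := v)) i)) = P v * (\<Prod>i\<in>A. P ((x(k := v)) i))"
      using A by simp
    also have "(\<Prod>i\<in>A. P ((x(k := v)) i)) = (\<Prod>i\<in>A. P (x i))"
      using A by (intro prod.cong) auto
    finally show "(\<Prod>i\<in>insert k A. P ((x(k := v)) i)) * P (F (x(k := v))) ^ t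
        = (\<Prod>i\<in>A. P (x i)) * (P v * P (a *s v + R x) ^ t)" by (simp add: F)
  qed
  also have "\<dots> = (\<Sum>x\<in>PiE A (\<lambda>_. UNIV). (\<Prod>i\<in>A. P (x i)) * (\<Sum>v\<in>UNIV. P v * P (a *s v + R x) ^ t))"
    by (subst sum.swap) (simp add: sum_distrib_left)
  also have "\<dots> \<le> (\<Sum>x\<in>PiE A (\<lambda>_. UNIV). (\<Prod>i\<in>A. P (x i)) * ?M)"
  proof (rule sum_mono)
    fix x show "(\<Prod>i\<in>A. P (x i)) * (\<Sum>v\<in>UNIV. P v * P (a *s v + R x) ^ t) \<le> (\<Prod>i\<in>A. P (x i)) * ?M"
      using P0 inner[of "R x"] by (intro mult_left_mono) (auto intro: prod_nonneg)
  qed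
  also have "\<dots> = ?M" using sum_PiE_prod_one[OF A(1) P1] by (simp add: sum_distrib_right[symmetric])
  finally show ?thesis .
qed


lemma prod_ind:
  assumes "finite T"
  shows "(if \<forall>i\<in>T. Q i then 1 else 0) = (\<Prod>i\<in>T. if Q i then 1 else (0::real))"
  using assms by (induction T rule: finite_induct) auto

lemma Z4:
  fixes P :: "'a::{finite,field}^'n \<Rightarrow> real" and G :: real
  assumes P0: "\<forall>y. P y \<ge> 0" and P1: "(\<Sum>y\<in>UNIV. P y) = 1"
    and T: "T \<subseteq> {1..<p}" and p1: "1 \<le> p" and G: "G \<ge> 0"
    and mom: "card T \<ge> 1 \<Longrightarrow> (\<Sum>y\<in>UNIV. P y ^ (card T + 1)) \<le> G ^ card T"
  shows "(\<Sum>z\<in>PiE {..<p} (\<lambda>_. UNIV). (\<Prod>i<p. P (z i)) *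
            (if \<forall>i\<in>T. z i - z 0 \<in> vec.span ((\<lambda>j. z j - z 0) ` ({..<p} - T)) then 1 else 0))
         \<le> (real CARD('a) ^ p * G) ^ card T"
proof -
  define U where "U = {..<p} - T"
  define t where "t = card T"
  have finU: "finite U" and finT: "finite T" using T unfolding U_def by (auto intro: finite_subset)
  have U0: "0 \<in> U" using T p1 unfolding U_def by auto
  have disj: "U \<inter> T = {}" unfolding U_def by auto
  have IUT: "{..<p} = U \<union> T" using T unfolding U_def by auto
  have cU: "card U \<le> p" unfolding U_def by (metis card_lessThan card_mono Diff_subset finite_lessThan)
  define sp where "sp x = vec.span ((\<lambda>j. x j - x 0) ` U)" for x :: "nat \<Rightarrow> 'a^'n"
  define ind where "ind x v = (if v - x 0 \<in> sp x then 1 else (0::real))" for x v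
  define mass where "mass x = (\<Sum>v\<in>UNIV. P v * ind x v)" for x
  define h where "h z = (\<Prod>i<p. P (z i)) *
            (if \<forall>i\<in>T. z i - z 0 \<in> vec.span ((\<lambda>j. z j - z 0) ` ({..<p} - T)) then 1 else (0::real))"
    for z :: "nat \<Rightarrow> 'a^'n"
  have Pprod: "0 \<le> (\<Prod>i\<in>U. P (x i))" for x using P0 by (intro prod_nonneg) auto
  have step1: "(\<Sum>z\<in>PiE {..<p} (\<lambda>_. UNIV). h z) = (\<Sum>x\<in>PiE U (\<lambda>_. UNIV). (\<Prod>i\<in>U. P (x i)) * mass x ^ t)"
  proof -
    have "(\<Sum>z\<in>PiE {..<p} (\<lambda>_. UNIV). h z)
        = (\<Sum>x\<in>PiE U (\<lambda>_. UNIV). \<Sum>y\<in>PiE T (\<lambda>_. UNIV). h (\<lambda>i. if i \<in> U then x i else y i))"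
      unfolding IUT by (rule sum_PiE_split[OF finU finT disj])
    also have "\<dots> = (\<Sum>x\<in>PiE U (\<lambda>_. UNIV). (\<Prod>i\<in>U. P (x i)) * mass x ^ t)"
    proof (intro sum.cong refl)
      fix x :: "nat \<Rightarrow> 'a^'n"
      have hm: "h (\<lambda>i. if i \<in> U then x i else y i)
          = (\<Prod>i\<in>U. P (x i)) * (\<Prod>i\<in>T. P (y i) * ind x (y i))" for y
      proof -
        define z where "z = (\<lambda>i. if i \<in> U then x i else y i)"
        have z0: "z 0 = x 0" using U0 unfolding z_def by simp
        have zU: "\<And>j. j \<in> U \<Longrightarrow> z j = x j" unfolding z_def by simp
        have zT: "\<And>i. i \<in> T \<Longrightarrow> z i = y i" using disj unfolding z_def by auto
        have pr: "(\<Prod>i<p. P (z i)) = (\<Prod>i\<in>U. P (x i)) * (\<Prod>i\<in>T. P (y i))"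
        proof -
          have "(\<Prod>i<p. P (z i)) = (\<Prod>i\<in>U. P (z i)) * (\<Prod>i\<in>T. P (z i))"
            unfolding IUT by (rule prod.union_disjoint[OF finU finT disj])
          also have "(\<Prod>i\<in>U. P (z i)) = (\<Prod>i\<in>U. P (x i))" using zU by (intro prod.cong) auto
          also have "(\<Prod>i\<in>T. P (z i)) = (\<Prod>i\<in>T. P (y i))" using zT by (intro prod.cong) auto
          finally show ?thesis .
        qed
        have im: "(\<lambda>j. z j - x 0) ` ({..<p} - T) = (\<lambda>j. x j - x 0) ` U"
          unfolding U_def[symmetric] using zU by (intro image_cong) auto
        have "(if \<forall>i\<in>T. z i - z 0 \<in> vec.span ((\<lambda>j. z j - z 0) ` ({..<p} - T)) then 1 else (0::real))
            = (if \<forall>i\<in>T. y i - x 0 \<in> sp x then 1 else 0)"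
          unfolding z0 im sp_def using zT by (intro if_cong refl) auto
        also have "\<dots> = (\<Prod>i\<in>T. ind x (y i))" unfolding ind_def by (rule prod_ind[OF finT])
        finally have ii: "(if \<forall>i\<in>T. z i - z 0 \<in> vec.span ((\<lambda>j. z j - z 0) ` ({..<p} - T)) then 1 else (0::real))
            = (\<Prod>i\<in>T. ind x (y i))" .
        show ?thesis unfolding h_def z_def[symmetric] pr ii by (simp add: prod.distrib mult.assoc)
      qed
      have "(\<Sum>y\<in>PiE T (\<lambda>_. UNIV). h (\<lambda>i. if i \<in> U then x i else y i))
          = (\<Prod>i\<in>U. P (x i)) * (\<Sum>y\<in>PiE T (\<lambda>_. UNIV). \<Prod>i\<in>T. P (y i) * ind x (y i))"
        unfolding hm by (simp add: sum_distrib_left)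
      also have "(\<Sum>y\<in>PiE T (\<lambda>_. UNIV). \<Prod>i\<in>T. P (y i) * ind x (y i)) = (\<Prod>i\<in>T. mass x)"
        unfolding mass_def using prod_sum_PiE[OF finT, of "\<lambda>_. UNIV" "\<lambda>_ v. P v * ind x v"] by simp
      also have "\<dots> = mass x ^ t" unfolding t_def by simp
      finally show "(\<Sum>y\<in>PiE T (\<lambda>_. UNIV). h (\<lambda>i. if i \<in> U then x i else y i))
          = (\<Prod>i\<in>U. P (x i)) * mass x ^ t" .
    qed
    finally show ?thesis .
  qed
  define comb :: "(nat \<Rightarrow> 'a) \<Rightarrow> (nat \<Rightarrow> 'a^'n) \<Rightarrow> 'a^'n"
    where "comb c x = x 0 + (\<Sum>j\<in>U. c j *s (x j - x 0))" for c x
  have mass0: "0 \<le> mass x" for x unfolding mass_def ind_def using P0 by (intro sum_nonneg) auto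
  have massle: "mass x \<le> (\<Sum>c\<in>PiE U (\<lambda>_. UNIV). P (comb c x))" for x
  proof -
    have "mass x = (\<Sum>v\<in>UNIV. if v - x 0 \<in> sp x then P v else 0)"
      unfolding mass_def ind_def by (intro sum.cong) auto
    also have "\<dots> = (\<Sum>v\<in>{v. v - x 0 \<in> sp x}. P v)"
      using sum.inter_filter[of UNIV P "\<lambda>v. v - x 0 \<in> sp x"] by simp
    also have "\<dots> \<le> (\<Sum>v\<in>(\<lambda>c. comb c x) ` PiE U (\<lambda>_. UNIV). P v)"
    proof (rule sum_mono2)
      show "{v. v - x 0 \<in> sp x} \<subseteq> (\<lambda>c. comb c x) ` PiE U (\<lambda>_. UNIV)"
      proof
        fix v assume "v \<in> {v. v - x 0 \<in> sp x}"
        then have "v - x 0 \<in> (\<lambda>c. \<Sum>j\<in>U. c j *s (x j - x 0)) ` PiE U (\<lambda>_. UNIV)"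
          using span_combos[OF finU, of "\<lambda>j. x j - x 0"] unfolding sp_def by blast
        then obtain c where c: "c \<in> PiE U (\<lambda>_. UNIV)" "v - x 0 = (\<Sum>j\<in>U. c j *s (x j - x 0))" by blast
        then have "v = comb c x" unfolding comb_def by (simp add: algebra_simps)
        then show "v \<in> (\<lambda>c. comb c x) ` PiE U (\<lambda>_. UNIV)" using c(1) by blast
      qed
    qed (use P0 in auto)
    also have "\<dots> \<le> (\<Sum>c\<in>PiE U (\<lambda>_. UNIV). P (comb c x))"
      using sum_image_le[of "PiE U (\<lambda>_. UNIV)" P "\<lambda>c. comb c x"] finU P0 by (simp add: finite_PiE o_def)
    finally show ?thesis .
  qed
  show ?thesis
  proof (cases "t = 0")
    case True
    have "(\<Sum>z\<in>PiE {..<p} (\<lambda>_. UNIV). h z) = 1"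
      unfolding step1 True using sum_PiE_prod_one[OF finU P1] by simp
    then show ?thesis unfolding h_def using True t_def by simp
  next
    case False
    then have t1: "t \<ge> 1" by simp
    let ?M = "\<Sum>y\<in>UNIV. P y ^ (t+1)"
    let ?N = "real (card (PiE U (\<lambda>_. UNIV :: 'a set)))"
    have N: "?N = real CARD('a) ^ card U" using finU by (simp add: card_PiE)
    have pw: "mass x ^ t \<le> ?N ^ (t - 1) * (\<Sum>c\<in>PiE U (\<lambda>_. UNIV). P (comb c x) ^ t)" for x
    proof -
      have "mass x ^ t \<le> (\<Sum>c\<in>PiE U (\<lambda>_. UNIV). P (comb c x)) ^ t"
        using massle mass0 by (intro power_mono) auto
      also have "\<dots> \<le> ?N ^ (t - 1) * (\<Sum>c\<in>PiE U (\<lambda>_. UNIV). P (comb c x) ^ t)"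
        using power_mean_sum[of "PiE U (\<lambda>_. UNIV)" "\<lambda>c. P (comb c x)" t] finU P0 t1
        by (simp add: finite_PiE)
      finally show ?thesis .
    qed
    have sv: "(\<Sum>x\<in>PiE U (\<lambda>_. UNIV). (\<Prod>i\<in>U. P (x i)) * P (comb c x) ^ t) \<le> ?M" for c
    proof (cases "\<exists>k\<in>U - {0}. c k \<noteq> 0")
      case True
      then obtain k where k: "k \<in> U" "k \<noteq> 0" "c k \<noteq> 0" by blast
      define A where "A = U - {k}"
      have UA: "U = insert k A" and kA: "k \<notin> A" and fA: "finite A"
        using k finU unfolding A_def by auto
      define R where "R x = x 0 - c k *s x 0 + (\<Sum>j\<in>A. c j *s (x j - x 0))" for x :: "nat \<Rightarrow> 'a^'n"
      have F: "comb c (x(k := v)) = c k *s v + R x" for x v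
      proof -
        have "comb c (x(k := v)) = x 0 + (c k *s (v - x 0) + (\<Sum>j\<in>A. c j *s ((x(k := v)) j - x 0)))"
          unfolding comb_def UA using k(2) kA fA by (simp add: sum.insert)
        also have "(\<Sum>j\<in>A. c j *s ((x(k := v)) j - x 0)) = (\<Sum>j\<in>A. c j *s (x j - x 0))"
          using kA by (intro sum.cong) auto
        finally have e1: "comb c (x(k := v)) = x 0 + (c k *s (v - x 0) + (\<Sum>j\<in>A. c j *s (x j - x 0)))" .
        have e2: "x 0 + (c k *s (v - x 0) + (\<Sum>j\<in>A. c j *s (x j - x 0))) = c k *s v + R x"
          unfolding R_def by (simp add: algebra_simps)
        show ?thesis by (rule trans[OF e1 e2])
      qed
      show ?thesis using SV[OF P0 P1 fA kA k(3), of "comb c" R t] F unfolding UA by simp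
    next
      case False
      define A where "A = U - {0}"
      have UA: "U = insert 0 A" and kA: "0 \<notin> A" and fA: "finite A"
        using U0 finU unfolding A_def by auto
      have F: "comb c (x(0 := v)) = 1 *s v + 0" for x v
      proof -
        have "(\<Sum>j\<in>U. c j *s ((x(0 := v)) j - (x(0 := v)) 0)) = 0"
        proof (intro sum.neutral ballI)
          fix j assume j: "j \<in> U"
          show "c j *s ((x(0 := v)) j - (x(0 := v)) 0) = 0"
          proof (cases "j = 0")
            case True then show ?thesis by simp
          next
            case False then show ?thesis using j \<open>\<not> (\<exists>k\<in>U - {0}. c k \<noteq> 0)\<close> by auto
          qed
        qed
        then show ?thesis unfolding comb_def by simp
      qed
      show ?thesis using SV[OF P0 P1 fA kA one_neq_zero, of "comb c" "\<lambda>_. 0" t] F unfolding UA by simp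
    qed
    have "(\<Sum>x\<in>PiE U (\<lambda>_. UNIV). (\<Prod>i\<in>U. P (x i)) * mass x ^ t)
        \<le> (\<Sum>x\<in>PiE U (\<lambda>_. UNIV). (\<Prod>i\<in>U. P (x i)) * (?N ^ (t - 1) * (\<Sum>c\<in>PiE U (\<lambda>_. UNIV). P (comb c x) ^ t)))"
      by (intro sum_mono mult_left_mono pw Pprod)
    also have "\<dots> = ?N ^ (t - 1) * (\<Sum>c\<in>PiE U (\<lambda>_. UNIV). \<Sum>x\<in>PiE U (\<lambda>_. UNIV). (\<Prod>i\<in>U. P (x i)) * P (comb c x) ^ t)"
      by (subst sum.swap) (simp add: sum_distrib_left mult_ac)
    also have "\<dots> \<le> ?N ^ (t - 1) * (\<Sum>c\<in>PiE U (\<lambda>_. UNIV :: 'a set). ?M)"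
    proof (rule mult_left_mono)
      show "(\<Sum>c\<in>PiE U (\<lambda>_. UNIV). \<Sum>x\<in>PiE U (\<lambda>_. UNIV). (\<Prod>i\<in>U. P (x i)) * P (comb c x) ^ t)
          \<le> (\<Sum>c\<in>PiE U (\<lambda>_. UNIV :: 'a set). ?M)" using sv by (intro sum_mono) blast
    qed simp
    also have "\<dots> = ?N ^ t * ?M" using t1 by (simp add: power_eq_if mult_ac)
    also have "\<dots> \<le> ?N ^ t * G ^ t" using mom t1 unfolding t_def by (intro mult_left_mono) auto
    also have "\<dots> = (?N * G) ^ t" by (simp add: power_mult_distrib)
    also have "\<dots> \<le> (real CARD('a) ^ p * G) ^ t"
    proof (intro power_mono mult_right_mono G)
      have "real CARD('a) ^ card U \<le> real CARD('a) ^ p"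
        using cU by (intro power_increasing) auto
      then show "?N \<le> real CARD('a) ^ p" using N by simp
    qed (simp add: N G)
    finally show ?thesis unfolding step1[unfolded h_def] t_def .
  qed
qed


lemma binom_lower:
  fixes u :: real
  assumes u: "u \<ge> 0" and p: "p \<ge> 2"
  shows "1 + real p * u + u ^ p \<le> (1 + u) ^ p"
  using p
proof (induction p rule: dec_induct)
  case base then show ?case by (simp add: power2_eq_square algebra_simps)
next
  case (step p)
  have "(1 + u) ^ Suc p = (1 + u) * (1 + u) ^ p" by simp
  also have "\<dots> \<ge> (1 + u) * (1 + real p * u + u ^ p)"
    using step.IH u by (intro mult_left_mono) auto
  finally have "(1 + u) * (1 + real p * u + u ^ p) \<le> (1 + u) ^ Suc p" .
  moreover have "1 + real (Suc p) * u + u ^ Suc p \<le> (1 + u) * (1 + real p * u + u ^ p)"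
  proof -
    have "0 \<le> real p * u * u + u ^ p" using u by simp
    then show ?thesis by (simp add: algebra_simps)
  qed
  ultimately show ?case by linarith
qed

lemma below_one_ineq:
  fixes y :: real
  assumes y: "0 \<le> y" "y \<le> 1" and p: "p \<ge> 2"
  shows "y ^ p \<le> (1 - y) ^ p - 1 + real p * y"
  using p
proof (induction p rule: dec_induct)
  case base then show ?case by (simp add: power2_eq_square algebra_simps)
next
  case (step p)
  have yp: "y ^ p \<le> y ^ 2" using y step.hyps by (intro power_decreasing) auto
  have "(1 - y) ^ Suc p = (1 - y) * (1 - y) ^ p" by simp
  also have "\<dots> \<ge> (1 - y) * (y ^ p + 1 - real p * y)"
    using step.IH y by (intro mult_left_mono) auto
  finally have A: "(1 - y) * (y ^ p + 1 - real p * y) \<le> (1 - y) ^ Suc p" .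
  have B: "y ^ Suc p \<le> (1 - y) * (y ^ p + 1 - real p * y) - 1 + real (Suc p) * y"
  proof -
    have "0 \<le> y ^ p * (1 - 2 * y) + real p * y ^ 2"
    proof (cases "y \<le> 1/2")
      case True then show ?thesis using y by (intro add_nonneg_nonneg mult_nonneg_nonneg) auto
    next
      case False
      have yy: "y * y ^ p \<le> y ^ p" using mult_right_mono[of y 1 "y ^ p"] y by simp
      have "y ^ p * (1 - 2 * y) \<ge> -(y ^ p)" using yy by (simp add: algebra_simps)
      moreover have "y ^ 2 \<le> real p * y ^ 2" using step.hyps by (simp add: mult_le_cancel_right1)
      ultimately show ?thesis using yp by linarith
    qed
    then show ?thesis by (simp add: algebra_simps power2_eq_square)
  qed
  from A B show ?case by linarith
qed

lemma abs_pow_le: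
  fixes x :: real
  assumes x: "x \<ge> 0" and p: "p \<ge> 2"
  shows "\<bar>x - 1\<bar> ^ p \<le> x ^ p - 1 - real p * (x - 1)"
proof (cases "x \<ge> 1")
  case True
  have "1 + real p * (x - 1) + (x - 1) ^ p \<le> (1 + (x - 1)) ^ p"
    using True p by (intro binom_lower) auto
  then show ?thesis using True by simp
next
  case False
  have "(1 - x) ^ p \<le> (1 - (1 - x)) ^ p - 1 + real p * (1 - x)"
    using False x p by (intro below_one_ineq) auto
  moreover have "\<bar>x - 1\<bar> = 1 - x" using False by simp
  ultimately show ?thesis by (simp add: algebra_simps)
qed


lemma syn_sum:
  fixes H :: "'a::{finite,field}^'n^'m" and Z :: "('a^'n) pmf"
  assumes ker: "{x. H *v x = 0} = C" and p1: "1 \<le> p"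
  shows "(\<Sum>s\<in>UNIV. pmf (syndrome_dist H Z) s ^ p)
       = (\<Sum>z\<in>PiE {..<p} (\<lambda>_. UNIV). (\<Prod>i<p. pmf Z (z i)) * (if \<forall>i<p. z i - z 0 \<in> C then 1 else 0))"
proof -
  let ?g = "\<lambda>z. \<Prod>i<p. pmf Z (z i)"
  have A: "pmf (syndrome_dist H Z) s = (\<Sum>x\<in>{x. H *v x = s}. pmf Z x)" for s
  proof -
    have "pmf (syndrome_dist H Z) s = measure (measure_pmf Z) ((\<lambda>z. H *v z) -` {s})"
      unfolding syndrome_dist_def pmf_map ..
    also have "(\<lambda>z. H *v z) -` {s} = {x. H *v x = s}" by auto
    also have "measure (measure_pmf Z) {x. H *v x = s} = (\<Sum>x\<in>{x. H *v x = s}. pmf Z x)"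
      by (rule measure_measure_pmf_finite) simp
    finally show ?thesis .
  qed
  have B: "(\<Sum>x\<in>{x. H *v x = s}. pmf Z x) ^ p = (\<Sum>z\<in>PiE {..<p} (\<lambda>_. {x. H *v x = s}). ?g z)" for s
    using prod_sum_PiE[of "{..<p}" "\<lambda>_. {x. H *v x = s}" "\<lambda>_ x. pmf Z x"] by simp
  have Cc: "(\<Sum>z\<in>PiE {..<p} (\<lambda>_. {x. H *v x = s}). ?g z)
      = (\<Sum>z\<in>PiE {..<p} (\<lambda>_. UNIV). if \<forall>i<p. H *v z i = s then ?g z else 0)" for s
  proof -
    have "{z \<in> PiE {..<p} (\<lambda>_. UNIV). \<forall>i<p. H *v z i = s} = PiE {..<p} (\<lambda>_. {x. H *v x = s})"
      by (auto simp: PiE_iff extensional_def)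
    then show ?thesis
      using sum.inter_filter[of "PiE {..<p} (\<lambda>_. UNIV)" ?g "\<lambda>z. \<forall>i<p. H *v z i = s"]
      by (simp add: finite_PiE)
  qed
  have D: "(\<Sum>s\<in>UNIV. if \<forall>i<p. H *v z i = s then ?g z else 0)
      = ?g z * (if \<forall>i<p. z i - z 0 \<in> C then 1 else 0)" for z
  proof -
    have mem: "\<And>w. w \<in> C \<longleftrightarrow> H *v w = 0" using ker by blast
    have ii: "\<And>i. H *v z i = H *v z 0 \<longleftrightarrow> z i - z 0 \<in> C"
      by (simp only: mem matrix_vector_mult_diff_distrib right_minus_eq)
    have eqv: "(\<forall>i<p. H *v z i = H *v z 0) \<longleftrightarrow> (\<forall>i<p. z i - z 0 \<in> C)"
      by (simp only: ii)
    show ?thesis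
    proof (cases "\<forall>i<p. H *v z i = H *v z 0")
      case True
      have p0: "0 < p" using p1 by simp
      have "(\<forall>i<p. H *v z i = s) \<longleftrightarrow> s = H *v z 0" for s
      proof
        assume "\<forall>i<p. H *v z i = s" then show "s = H *v z 0" using p0 by simp
      next
        assume "s = H *v z 0" then show "\<forall>i<p. H *v z i = s" using True by blast
      qed
      then have "(\<Sum>s\<in>UNIV. if \<forall>i<p. H *v z i = s then ?g z else 0)
          = (\<Sum>s\<in>UNIV. if s = H *v z 0 then ?g z else 0)" by simp
      also have "\<dots> = ?g z" by simp
      finally have r: "(\<Sum>s\<in>UNIV. if \<forall>i<p. H *v z i = s then ?g z else 0) = ?g z" .
      have c: "\<forall>i<p. z i - z 0 \<in> C" using True eqv by blast
      show ?thesis using r c by simp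
    next
      case False
      have p0: "0 < p" using p1 by simp
      have nf: "\<not> (\<forall>i<p. H *v z i = s)" for s
      proof
        assume a: "\<forall>i<p. H *v z i = s"
        then have "H *v z 0 = s" using p0 by simp
        then show False using a False by simp
      qed
      have r: "(\<Sum>s\<in>UNIV. if \<forall>i<p. H *v z i = s then ?g z else 0) = 0"
        by (rule sum.neutral, rule ballI, rule if_not_P[OF nf])
      have c: "\<not> (\<forall>i<p. z i - z 0 \<in> C)" using False eqv by blast
      show ?thesis using r c by (simp only: if_False mult_zero_right)
    qed
  qed
  have "(\<Sum>s\<in>UNIV. pmf (syndrome_dist H Z) s ^ p)
      = (\<Sum>s\<in>UNIV. \<Sum>z\<in>PiE {..<p} (\<lambda>_. UNIV). if \<forall>i<p. H *v z i = s then ?g z else 0)"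
    by (simp only: A B Cc)
  also have "\<dots> = (\<Sum>z\<in>PiE {..<p} (\<lambda>_. UNIV). \<Sum>s\<in>UNIV. if \<forall>i<p. H *v z i = s then ?g z else 0)"
    by (rule sum.swap)
  also have "\<dots> = (\<Sum>z\<in>PiE {..<p} (\<lambda>_. UNIV). ?g z * (if \<forall>i<p. z i - z 0 \<in> C then 1 else 0))"
    by (simp only: D)
  finally show ?thesis .
qed

lemma moment_bound:
  fixes P :: "'b::finite \<Rightarrow> real" and p t :: nat
  assumes P0: "\<forall>y. P y \<ge> 0" and P1: "(\<Sum>y\<in>UNIV. P y) = 1" and t: "1 \<le> t" "t \<le> p - 1"
  shows "(\<Sum>y\<in>UNIV. P y ^ (t+1)) \<le> ((\<Sum>y\<in>UNIV. P y ^ p) powr (1 / (real p - 1))) ^ t"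
proof -
  define Tp where "Tp = (\<Sum>y\<in>UNIV. P y ^ p)"
  define th where "th = real t / (real p - 1)"
  have p2: "p \<ge> 2" using t by simp
  have pr: "real p - 1 = real (p - 1)" using p2 by simp
  have tp: "real t \<le> real p - 1" "1 \<le> real t" using t p2 pr by auto
  have th: "0 < th" "th \<le> 1" unfolding th_def using tp by auto
  obtain y0 where y0: "P y0 > 0"
  proof -
    have "\<exists>y. P y \<noteq> 0" using P1 by (metis (mono_tags) sum.neutral zero_neq_one)
    then show ?thesis using P0 that by (metis less_eq_real_def)
  qed
  have Tp: "Tp > 0" unfolding Tp_def
    using y0 P0 by (intro sum_pos2[of _ y0]) auto
  have TpP: "Tp = (\<Sum>y\<in>UNIV. P y * P y ^ (p - 1))" unfolding Tp_def
    using p2 by (intro sum.cong refl) (metis Suc_diff_1 less_le_trans numeral_2_eq_2 power_Suc zero_less_Suc)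
  have pt: "P y ^ (t+1) = P y * (P y ^ (p - 1)) powr th" for y
  proof (cases "P y = 0")
    case True then show ?thesis by simp
  next
    case False
    then have pos: "P y > 0" using P0 by (simp add: less_le)
    have "(P y ^ (p - 1)) powr th = (P y powr real (p - 1)) powr th" using pos by (simp add: powr_realpow)
    also have "\<dots> = P y powr (real (p - 1) * th)" by (simp add: powr_powr)
    also have "real (p - 1) * th = real t" unfolding th_def using pr p2 by simp
    also have "P y powr real t = P y ^ t" using pos by (simp add: powr_realpow)
    finally show ?thesis by simp
  qed
  have "(\<Sum>y\<in>UNIV. P y ^ (t+1)) = (\<Sum>y\<in>UNIV. P y * (Tp powr th * ((P y ^ (p - 1)) / Tp) powr th))"
  proof (intro sum.cong refl)
    fix y
    have "Tp powr th * ((P y ^ (p - 1)) / Tp) powr th = (P y ^ (p - 1)) powr th"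
      using Tp by (simp add: powr_divide)
    then show "P y ^ (t+1) = P y * (Tp powr th * ((P y ^ (p - 1)) / Tp) powr th)"
      by (simp only: pt)
  qed
  also have "\<dots> \<le> (\<Sum>y\<in>UNIV. P y * (Tp powr th * (th * ((P y ^ (p - 1)) / Tp) + (1 - th))))"
    using P0 Tp th by (intro sum_mono mult_left_mono tangent_powr) auto
  also have "\<dots> = (\<Sum>y\<in>UNIV. (Tp powr th * th / Tp) * (P y * P y ^ (p - 1)) + (Tp powr th * (1 - th)) * P y)"
    using Tp by (intro sum.cong refl) (simp add: field_simps)
  also have "\<dots> = (Tp powr th * th / Tp) * (\<Sum>y\<in>UNIV. P y * P y ^ (p - 1)) + (Tp powr th * (1 - th)) * (\<Sum>y\<in>UNIV. P y)"
    by (simp add: sum.distrib sum_distrib_left)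
  also have "\<dots> = Tp powr th" unfolding TpP[symmetric] P1 using Tp by (simp add: field_simps)
  also have "\<dots> = (Tp powr (1 / (real p - 1))) ^ t"
    using Tp by (simp add: powr_power th_def)
  finally show ?thesis unfolding Tp_def .
qed


lemma avg_ln:
  fixes S :: "'b \<Rightarrow> real"
  assumes "finite L" "L \<noteq> {}" "\<And>C. C \<in> L \<Longrightarrow> S C > 0"
  shows "(\<Sum>C\<in>L. ln (S C)) \<le> real (card L) * ln ((\<Sum>C\<in>L. S C) / real (card L))"
proof -
  define N where "N = real (card L)"
  have N: "N > 0" unfolding N_def using assms by (simp add: card_gt_0_iff)
  define A where "A = (\<Sum>C\<in>L. S C) / N"
  have A: "A > 0" unfolding A_def using assms N by (intro divide_pos_pos sum_pos) auto
  have "ln (S C) \<le> ln A + (S C / A - 1)" if "C \<in> L" for C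
  proof -
    have "ln (S C / A) \<le> S C / A - 1" using assms(3)[OF that] A by (intro ln_le_minus_one) simp
    then show ?thesis using assms(3)[OF that] A by (simp add: ln_div)
  qed
  then have "(\<Sum>C\<in>L. ln (S C)) \<le> (\<Sum>C\<in>L. ln A + (S C / A - 1))" by (rule sum_mono)
  also have "\<dots> = N * ln A + ((\<Sum>C\<in>L. S C) / A - N)"
    unfolding N_def by (simp add: sum.distrib sum_subtractf sum_divide_distrib)
  also have "(\<Sum>C\<in>L. S C) / A = N" unfolding A_def using N A A_def by (simp add: field_simps)
  finally show ?thesis unfolding A_def N_def by simp
qed

lemma avg_powr:
  fixes x :: "'b \<Rightarrow> real"
  assumes "finite L" "L \<noteq> {}" "\<And>C. C \<in> L \<Longrightarrow> x C \<ge> 0" "0 < th" "th \<le> 1"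
  shows "(\<Sum>C\<in>L. x C powr th) \<le> real (card L) * ((\<Sum>C\<in>L. x C) / real (card L)) powr th"
proof -
  define N where "N = real (card L)"
  have N: "N > 0" unfolding N_def using assms by (simp add: card_gt_0_iff)
  define a where "a = (\<Sum>C\<in>L. x C) / N"
  have a0: "a \<ge> 0" unfolding a_def using assms N by (intro divide_nonneg_pos sum_nonneg) auto
  show ?thesis
  proof (cases "a = 0")
    case True
    then have "(\<Sum>C\<in>L. x C) = 0" unfolding a_def using N by simp
    then have "\<forall>C\<in>L. x C = 0" using sum_nonneg_eq_0_iff[OF assms(1)] assms(3) by blast
    then show ?thesis by simp
  next
    case False
    then have a: "a > 0" using a0 by simp
    have "x C powr th \<le> a powr th * (th * (x C / a) + (1 - th))" if "C \<in> L" for C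
    proof -
      have "x C powr th = a powr th * (x C / a) powr th" using a assms(3)[OF that]
        by (simp add: powr_divide)
      also have "\<dots> \<le> a powr th * (th * (x C / a) + (1 - th))"
        using a assms(3)[OF that] assms(4,5) by (intro mult_left_mono tangent_powr) auto
      finally show ?thesis .
    qed
    then have "(\<Sum>C\<in>L. x C powr th) \<le> (\<Sum>C\<in>L. a powr th * (th * (x C / a) + (1 - th)))"
      by (rule sum_mono)
    also have "\<dots> = (\<Sum>C\<in>L. (a powr th * th / a) * x C + a powr th * (1 - th))"
      using a by (intro sum.cong refl) (simp add: field_simps)
    also have "\<dots> = (a powr th * th / a) * (\<Sum>C\<in>L. x C) + N * (a powr th * (1 - th))"
      unfolding N_def by (simp add: sum.distrib sum_distrib_left)
    also have "\<dots> = a powr th * (th * ((\<Sum>C\<in>L. x C) / a) + N * (1 - th))"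
      by (simp add: algebra_simps)
    also have "(\<Sum>C\<in>L. x C) / a = N" unfolding a_def using N a a_def by (simp add: field_simps)
    finally have "(\<Sum>C\<in>L. x C powr th) \<le> a powr th * (th * N + N * (1 - th))" .
    also have "\<dots> = N * a powr th" by (simp add: algebra_simps)
    finally show ?thesis unfolding a_def N_def .
  qed
qed


lemma ker_pc:
  fixes C :: "('a::{finite,field}^'n) set"
  assumes C: "C \<in> linear_codes CARD('m::finite)" and mn: "CARD('m) \<le> CARD('n)"
  shows "{x. (parity_check C :: 'a^'n^'m) *v x = 0} = C"
proof -
  have "\<exists>H :: 'a^'n^'m. is_parity_check H C" by (rule parity_check_exists[OF C mn])
  then have "is_parity_check (parity_check C :: 'a^'n^'m) C"
    unfolding parity_check_def by (rule someI_ex)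
  then show ?thesis unfolding is_parity_check_def by blast
qed

lemma sum_ind_card:
  assumes "finite L"
  shows "(\<Sum>C\<in>L. if Q C then 1 else (0::real)) = real (card {C\<in>L. Q C})"
proof -
  have "(\<Sum>C\<in>L. if Q C then 1 else (0::real)) = (\<Sum>C\<in>{C\<in>L. Q C}. 1)"
    using sum.inter_filter[OF assms, of "\<lambda>_. 1::real" Q] by simp
  then show ?thesis by simp
qed

lemma expected_S:
  fixes Z :: "('a::{finite,field}^'n) pmf" and p :: nat and \<epsilon> G :: real
  assumes p2: "p \<ge> 2" and mn: "CARD('m::finite) \<le> CARD('n)"
    and G: "G \<ge> 0" and mom: "\<And>t. 1 \<le> t \<Longrightarrow> t \<le> p - 1 \<Longrightarrow> (\<Sum>y\<in>UNIV. pmf Z y ^ (t+1)) \<le> G ^ t"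
    and rate: "real CARD('a) ^ (CARD('m) + p) * G \<le> \<epsilon>"
  shows "(\<Sum>C\<in>linear_codes CARD('m). real CARD('a) ^ (CARD('m) * (p - 1)) *
            (\<Sum>s\<in>UNIV. pmf (syndrome_dist (parity_check C :: 'a^'n^'m) Z) s ^ p))
         \<le> real (card (linear_codes CARD('m) :: ('a^'n) set set)) * (1 + \<epsilon>) ^ (p - 1)"
proof -
  define q where "q = real CARD('a)"
  define m where "m = CARD('m)"
  define L where "L = (linear_codes m :: ('a^'n) set set)"
  define N where "N = real (card L)"
  define g where "g z = (\<Prod>i<p. pmf Z (z i))" for z :: "nat \<Rightarrow> 'a^'n"
  define J where "J = {1..<p}"
  define old where "old z i = (z i - z 0 \<in> vec.span ((\<lambda>j. z j - z 0) ` {..<i}))" for z :: "nat \<Rightarrow> 'a^'n" and i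
  define f where "f z i = (if old z i then q ^ m else 0)" for z i
  let ?Tup = "PiE {..<p} (\<lambda>_. UNIV :: ('a^'n) set)"
  have q1: "q \<ge> 1" unfolding q_def by simp
  have p1: "1 \<le> p" using p2 by simp
  have finL: "finite L" unfolding L_def by (rule finite_lc)
  have finJ: "finite J" unfolding J_def by simp
  have cJ: "card J = p - 1" unfolding J_def by simp
  have g0: "g z \<ge> 0" for z unfolding g_def by (intro prod_nonneg) auto
  have f0: "f z i \<ge> 0" for z i unfolding f_def using q1 by simp
  have P0: "\<forall>y. pmf Z y \<ge> 0" by simp
  have P1: "(\<Sum>y\<in>UNIV. pmf Z y) = 1" by (rule sum_pmf_eq_1) auto
  have ker: "{x. (parity_check C :: 'a^'n^'m) *v x = 0} = C" if "C \<in> L" for C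
    using ker_pc[of C] that mn unfolding L_def m_def by blast
  have sy: "(\<Sum>s\<in>UNIV. pmf (syndrome_dist (parity_check C :: 'a^'n^'m) Z) s ^ p)
      = (\<Sum>z\<in>?Tup. g z * (if \<forall>i<p. z i - z 0 \<in> C then 1 else 0))" if "C \<in> L" for C
    unfolding g_def by (rule syn_sum[OF ker[OF that] p1])
  have swap: "(\<Sum>C\<in>L. \<Sum>s\<in>UNIV. pmf (syndrome_dist (parity_check C :: 'a^'n^'m) Z) s ^ p)
      = (\<Sum>z\<in>?Tup. g z * real (card {C\<in>L. \<forall>i<p. z i - z 0 \<in> C}))"
  proof -
    have "(\<Sum>C\<in>L. \<Sum>s\<in>UNIV. pmf (syndrome_dist (parity_check C :: 'a^'n^'m) Z) s ^ p)
        = (\<Sum>C\<in>L. \<Sum>z\<in>?Tup. g z * (if \<forall>i<p. z i - z 0 \<in> C then 1 else 0))"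
      using sy by (rule sum.cong[OF refl])
    also have "\<dots> = (\<Sum>z\<in>?Tup. \<Sum>C\<in>L. g z * (if \<forall>i<p. z i - z 0 \<in> C then 1 else 0))"
      by (rule sum.swap)
    also have "\<dots> = (\<Sum>z\<in>?Tup. g z * real (card {C\<in>L. \<forall>i<p. z i - z 0 \<in> C}))"
      by (intro sum.cong refl) (simp only: sum_distrib_left[symmetric] sum_ind_card[OF finL])
    finally show ?thesis .
  qed
  have perz: "q ^ (m * (p - 1)) * real (card {C\<in>L. \<forall>i<p. z i - z 0 \<in> C})
      \<le> N * (\<Sum>T\<in>Pow J. \<Prod>i\<in>T. f z i)" for z
  proof -
    define d where "d i = z i - z 0" for i
    define fac where "fac i = (if d i \<in> vec.span (d ` {..<i}) then 1 else q ^ m)" for i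
    define c where "c = real (card {C\<in>L. \<forall>i<p. z i - z 0 \<in> C})"
    have c0: "c \<ge> 0" unfolding c_def by simp
    have cs: "c * (\<Prod>i<p. fac i) \<le> N"
      using count_seq[where k=m and d=d and j=p] mn unfolding c_def N_def L_def fac_def d_def q_def m_def by simp
    have fac0: "fac 0 = 1" unfolding fac_def d_def by (simp add: vec.span_zero)
    have Iins: "{..<p} = insert 0 J" "0 \<notin> J" unfolding J_def using p1 by auto
    have pf: "(\<Prod>i<p. fac i) = (\<Prod>i\<in>J. fac i)" unfolding Iins(1) using Iins(2) finJ fac0 by simp
    have oldd: "old z i = (d i \<in> vec.span (d ` {..<i}))" for i unfolding old_def d_def by simp
    have pt: "q ^ m \<le> fac i * (f z i + 1)" for i
      unfolding fac_def f_def oldd using q1 by auto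
    have "q ^ (m * (p - 1)) = (\<Prod>i\<in>J. q ^ m)" using cJ by (simp add: power_mult)
    also have "\<dots> \<le> (\<Prod>i\<in>J. fac i * (f z i + 1))"
      using pt q1 by (intro prod_mono) auto
    also have "\<dots> = (\<Prod>i\<in>J. fac i) * (\<Prod>i\<in>J. f z i + 1)" by (rule prod.distrib)
    finally have qle: "q ^ (m * (p - 1)) \<le> (\<Prod>i\<in>J. fac i) * (\<Prod>i\<in>J. f z i + 1)" .
    have pa: "(\<Prod>i\<in>J. f z i + 1) = (\<Sum>T\<in>Pow J. \<Prod>i\<in>T. f z i)"
      using prod_add[OF finJ, of "f z" "\<lambda>_. 1"] by simp
    have fp: "0 \<le> (\<Prod>i\<in>J. f z i + 1)" using f0 by (intro prod_nonneg) (auto intro: add_nonneg_nonneg)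
    have "q ^ (m * (p - 1)) * c \<le> ((\<Prod>i\<in>J. fac i) * (\<Prod>i\<in>J. f z i + 1)) * c"
      using qle c0 by (rule mult_right_mono)
    also have "\<dots> = (c * (\<Prod>i\<in>J. fac i)) * (\<Prod>i\<in>J. f z i + 1)" by (simp add: ac_simps)
    also have "\<dots> \<le> N * (\<Prod>i\<in>J. f z i + 1)" using cs pf fp by (intro mult_right_mono) auto
    finally show ?thesis unfolding c_def pa .
  qed
  have perT: "(\<Sum>z\<in>?Tup. g z * (\<Prod>i\<in>T. f z i)) \<le> \<epsilon> ^ card T" if T: "T \<in> Pow J" for T
  proof -
    have TJ: "T \<subseteq> J" using T by simp
    have finT: "finite T" using TJ finJ by (rule finite_subset)
    have cT: "card T \<le> p - 1" using card_mono[OF finJ TJ] cJ by simp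
    define ind' where "ind' z = (if \<forall>i\<in>T. z i - z 0 \<in> vec.span ((\<lambda>j. z j - z 0) ` ({..<p} - T)) then 1 else (0::real))" for z :: "nat \<Rightarrow> 'a^'n"
    have fT: "(\<Prod>i\<in>T. f z i) \<le> q ^ (m * card T) * ind' z" for z
    proof -
      have "(\<Prod>i\<in>T. f z i) = (\<Prod>i\<in>T. q ^ m * (if old z i then 1 else 0))"
        unfolding f_def by (intro prod.cong) auto
      also have "\<dots> = q ^ (m * card T) * (\<Prod>i\<in>T. if old z i then 1 else 0)"
        by (simp add: prod.distrib power_mult)
      also have "(\<Prod>i\<in>T. if old z i then 1 else (0::real)) = (if \<forall>i\<in>T. old z i then 1 else 0)"
        by (rule prod_ind[OF finT, symmetric])
      also have "\<dots> \<le> ind' z"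
      proof (cases "\<forall>i\<in>T. old z i")
        case True
        have Tp: "T \<subseteq> {..<p}" using TJ unfolding J_def by auto
        have "\<forall>i\<in>T. z i - z 0 \<in> vec.span ((\<lambda>j. z j - z 0) ` {..<i})"
          using True unfolding old_def .
        then have "\<forall>i\<in>T. z i - z 0 \<in> vec.span ((\<lambda>j. z j - z 0) ` ({..<p} - T))"
          using greedy[OF Tp, where d="\<lambda>j. z j - z 0"] by blast
        then show ?thesis unfolding ind'_def by simp
      next
        case False
        then have "(if \<forall>i\<in>T. old z i then 1 else (0::real)) = 0" by (simp only: if_False)
        then show ?thesis unfolding ind'_def by simp
      qed
      finally show ?thesis using q1 by (simp add: mult_left_mono)
    qed
    have z4: "(\<Sum>z\<in>?Tup. g z * ind' z) \<le> (q ^ p * G) ^ card T"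
      unfolding g_def ind'_def q_def
      by (rule Z4[OF P0 P1 _ p1 G]) (use TJ J_def mom cT in auto)
    have "(\<Sum>z\<in>?Tup. g z * (\<Prod>i\<in>T. f z i)) \<le> (\<Sum>z\<in>?Tup. g z * (q ^ (m * card T) * ind' z))"
      using fT g0 by (intro sum_mono mult_left_mono) auto
    also have "\<dots> = q ^ (m * card T) * (\<Sum>z\<in>?Tup. g z * ind' z)"
      by (simp add: sum_distrib_left mult_ac)
    also have "\<dots> \<le> q ^ (m * card T) * (q ^ p * G) ^ card T"
      using z4 q1 by (intro mult_left_mono) auto
    also have "\<dots> = (q ^ (m + p) * G) ^ card T"
      by (simp add: power_mult power_add power_mult_distrib mult_ac)
    also have "\<dots> \<le> \<epsilon> ^ card T"
      using rate G q1 unfolding q_def m_def by (intro power_mono) auto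
    finally show ?thesis .
  qed
  have sumT: "(\<Sum>T\<in>Pow J. \<epsilon> ^ card T) = (1 + \<epsilon>) ^ (p - 1)"
    using prod_add[OF finJ, of "\<lambda>_. \<epsilon>" "\<lambda>_. 1"] cJ by (simp add: add.commute)
  have "(\<Sum>C\<in>L. q ^ (m * (p - 1)) * (\<Sum>s\<in>UNIV. pmf (syndrome_dist (parity_check C :: 'a^'n^'m) Z) s ^ p))
      = q ^ (m * (p - 1)) * (\<Sum>z\<in>?Tup. g z * real (card {C\<in>L. \<forall>i<p. z i - z 0 \<in> C}))"
    by (simp only: sum_distrib_left[symmetric] swap)
  also have "\<dots> = (\<Sum>z\<in>?Tup. g z * (q ^ (m * (p - 1)) * real (card {C\<in>L. \<forall>i<p. z i - z 0 \<in> C})))"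
    by (simp add: sum_distrib_left mult_ac)
  also have "\<dots> \<le> (\<Sum>z\<in>?Tup. g z * (N * (\<Sum>T\<in>Pow J. \<Prod>i\<in>T. f z i)))"
    using perz g0 by (intro sum_mono mult_left_mono) auto
  also have "\<dots> = N * (\<Sum>T\<in>Pow J. \<Sum>z\<in>?Tup. g z * (\<Prod>i\<in>T. f z i))"
    by (subst sum.swap) (simp add: sum_distrib_left mult_ac)
  also have "\<dots> \<le> N * (\<Sum>T\<in>Pow J. \<epsilon> ^ card T)"
    unfolding N_def using perT by (intro mult_left_mono sum_mono) auto
  also have "\<dots> = N * (1 + \<epsilon>) ^ (p - 1)" by (simp only: sumT)
  finally show ?thesis unfolding q_def m_def L_def N_def .
qed


lemma pmf_pos_exists:
  fixes P :: "'b::finite pmf"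
  shows "\<exists>y. pmf P y > 0"
proof -
  have "(\<Sum>y\<in>UNIV. pmf P y) = 1" by (rule sum_pmf_eq_1) auto
  then have "\<exists>y. pmf P y \<noteq> 0" by (metis (mono_tags) sum.neutral zero_neq_one)
  then show ?thesis by (metis less_eq_real_def pmf_nonneg)
qed

lemma sum_pow_pos:
  fixes P :: "'b::finite pmf"
  shows "(\<Sum>y\<in>UNIV. pmf P y ^ p) > 0"
proof -
  obtain y0 where "pmf P y0 > 0" using pmf_pos_exists by blast
  then show ?thesis by (intro sum_pos2[of _ y0]) auto
qed

theorem corollary3p2:
  fixes Z :: "('a::{finite,field} ^ 'n) pmf"
    and p :: nat and \<epsilon> :: real
  defines "q \<equiv> real CARD('a)"
    and "m \<equiv> CARD('m::finite)"
    and "n \<equiv> CARD('n)"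
  assumes eps: "\<epsilon> > 0"
    and p: "p \<ge> 2"
    and mn: "m \<le> n"
    and rate: "real m \<le> renyi_entropy q (real p) Z - real p - log q (1 / \<epsilon>)"
  shows "(\<Sum>C\<in>linear_codes m.
            renyi_div q (real p) (syndrome_dist (parity_check C :: 'a^'n^'m) Z)
              (pmf_of_set (UNIV :: ('a^'m) set))) / real (card (linear_codes m :: ('a^'n) set set))
           \<le> real p * \<epsilon> / ((real p - 1) * ln q)
       \<and> (\<Sum>C\<in>linear_codes m.
            pnorm (real p) (\<lambda>x::'a^'m. q ^ m * pmf (syndrome_dist (parity_check C :: 'a^'n^'m) Z) x - 1))
              / real (card (linear_codes m :: ('a^'n) set set))
           \<le> 2 powr (1 - 1 / real p) * ((1 + \<epsilon>) ^ p - 1) powr (1 / real p)"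
proof -
  define L where "L = (linear_codes m :: ('a^'n) set set)"
  define N where "N = real (card L)"
  define PH where "PH C = syndrome_dist (parity_check C :: 'a^'n^'m) Z" for C
  define S where "S C = q ^ (m * (p - 1)) * (\<Sum>s\<in>UNIV. pmf (PH C) s ^ p)" for C
  define Tp where "Tp = (\<Sum>y\<in>UNIV. pmf Z y ^ p)"
  define G where "G = Tp powr (1 / (real p - 1))"
  have q2: "q \<ge> 2" unfolding q_def using q_ge2[where 'a='a] by linarith
  have q1: "q > 1" using q2 by simp
  have lnq: "ln q > 0" using q1 by simp
  have p1: "1 \<le> p" and pr: "real p - 1 > 0" using p by auto
  have mn': "CARD('m) \<le> CARD('n)" using mn unfolding m_def n_def .
  have Tp: "Tp > 0" unfolding Tp_def by (rule sum_pow_pos)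
  have Gpos: "G > 0" unfolding G_def using Tp by simp
  have mom: "(\<Sum>y\<in>UNIV. pmf Z y ^ (t+1)) \<le> G ^ t" if "1 \<le> t" "t \<le> p - 1" for t
    unfolding G_def Tp_def
    by (rule moment_bound[OF _ _ that]) (auto intro: sum_pmf_eq_1)
  have HTp: "renyi_entropy q (real p) Z = 1 / (1 - real p) * log q Tp"
    unfolding renyi_entropy_def Tp_def using p1 by (simp add: powr_realpow')
  have rateG: "q ^ (m + p) * G \<le> \<epsilon>"
  proof -
    have r: "real m + real p + log q (1 / \<epsilon>) \<le> 1 / (1 - real p) * log q Tp"
      using rate HTp by simp
    have "q powr (real m + real p + log q (1 / \<epsilon>)) \<le> q powr (1 / (1 - real p) * log q Tp)"
      using r q1 by simp
    moreover have "q powr (real m + real p + log q (1 / \<epsilon>)) = q ^ (m + p) * (1 / \<epsilon>)"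
    proof -
      have "q powr (real m + real p + log q (1 / \<epsilon>)) = q powr (real (m + p)) * q powr (log q (1 / \<epsilon>))"
        by (simp add: powr_add)
      also have "q powr (real (m + p)) = q ^ (m + p)" using q1 by (rule powr_realpow[OF less_trans[OF zero_less_one]])
      also have "q powr (log q (1 / \<epsilon>)) = 1 / \<epsilon>" using q1 eps by simp
      finally show ?thesis .
    qed
    moreover have "q powr (1 / (1 - real p) * log q Tp) = 1 / G"
    proof -
      have ee: "1 / (1 - real p) = - (1 / (real p - 1))" using pr by (simp add: field_simps)
      have "q powr (1 / (1 - real p) * log q Tp) = (q powr (log q Tp)) powr (1 / (1 - real p))"
        by (simp add: powr_powr mult.commute)
      also have "\<dots> = Tp powr (1 / (1 - real p))" using q1 Tp by simp
      also have "\<dots> = Tp powr (- (1 / (real p - 1)))" by (simp only: ee)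
      also have "\<dots> = 1 / G" unfolding G_def by (simp add: powr_minus divide_inverse)
      finally show ?thesis .
    qed
    ultimately have "q ^ (m + p) * (1 / \<epsilon>) \<le> 1 / G" by simp
    then show ?thesis using Gpos eps by (simp add: field_simps)
  qed
  have EXP: "(\<Sum>C\<in>L. S C) \<le> N * (1 + \<epsilon>) ^ (p - 1)"
    using expected_S[OF p mn' less_imp_le[OF Gpos] mom, of \<epsilon>] rateG
    unfolding S_def PH_def L_def N_def q_def m_def by simp
  have finL: "finite L" unfolding L_def by (rule finite_lc)
  have cardm: "real CARD('a^'m) = q ^ m" unfolding q_def m_def by simp
  have Spos: "S C > 0" for C
    unfolding S_def using q1 sum_pow_pos[of "PH C" p] by simp
  have Dform: "renyi_div q (real p) (PH C) (pmf_of_set UNIV) = ln (S C) / ((real p - 1) * ln q)" for C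
  proof -
    have u: "pmf (pmf_of_set (UNIV :: ('a^'m) set)) s = 1 / q ^ m" for s
      using cardm by (simp add: pmf_of_set)
    have e: "(1 / q ^ m) powr (- (real p - 1)) = q ^ (m * (p - 1))"
    proof -
      have "(1 / q ^ m) powr (- (real p - 1)) = inverse ((1 / q ^ m) powr (real p - 1))"
        by (rule powr_minus)
      also have "(1 / q ^ m) powr (real p - 1) = 1 / (q ^ m) powr (real p - 1)"
        by (simp add: powr_divide)
      also have "inverse (1 / (q ^ m) powr (real p - 1)) = (q ^ m) powr (real p - 1)"
        by simp
      also have "\<dots> = (q ^ m) powr real (p - 1)" using p1 by (simp add: of_nat_diff)
      also have "\<dots> = (q ^ m) ^ (p - 1)" using q1 by (simp add: powr_realpow)
      also have "\<dots> = q ^ (m * (p - 1))" by (simp add: power_mult)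
      finally show ?thesis .
    qed
    have "(\<Sum>x\<in>UNIV. pmf (PH C) x powr real p * pmf (pmf_of_set UNIV) x powr (- (real p - 1))) = S C"
      unfolding S_def u e using p1 by (simp add: powr_realpow' sum_distrib_left mult.commute)
    then show ?thesis unfolding renyi_div_def log_def by simp
  qed
  have Sge: "pnorm (real p) (\<lambda>x::'a^'m. q ^ m * pmf (PH C) x - 1) \<le> (S C - 1) powr (1 / real p)
      \<and> S C - 1 \<ge> 0" for C
  proof -
    let ?P = "pmf (PH C)"
    define inner where "inner = (1 / real CARD('a^'m)) * (\<Sum>x\<in>UNIV. \<bar>q ^ m * ?P x - 1\<bar> powr real p)"
    have inner0: "inner \<ge> 0" unfolding inner_def by (intro mult_nonneg_nonneg sum_nonneg) auto
    have sP: "(\<Sum>x\<in>UNIV. ?P x) = 1" by (rule sum_pmf_eq_1) auto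
    have "(\<Sum>x\<in>UNIV. \<bar>q ^ m * ?P x - 1\<bar> powr real p) = (\<Sum>x\<in>UNIV. \<bar>q ^ m * ?P x - 1\<bar> ^ p)"
      using p1 by (simp add: powr_realpow')
    also have "\<dots> \<le> (\<Sum>x\<in>UNIV. (q ^ m * ?P x) ^ p - 1 - real p * (q ^ m * ?P x - 1))"
      using q1 p by (intro sum_mono abs_pow_le) auto
    also have "\<dots> = q ^ (m * p) * (\<Sum>x\<in>UNIV. ?P x ^ p) - q ^ m - real p * (q ^ m * (\<Sum>x\<in>UNIV. ?P x) - q ^ m)"
    proof -
      have one: "(\<Sum>x\<in>(UNIV :: ('a^'m) set). (1::real)) = q ^ m" using cardm by simp
      have s1: "(\<Sum>x\<in>UNIV. (q ^ m * ?P x) ^ p - 1 - real p * (q ^ m * ?P x - 1))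
          = (\<Sum>x\<in>UNIV. (q ^ m * ?P x) ^ p) - (\<Sum>x\<in>(UNIV :: ('a^'m) set). 1)
            - real p * ((\<Sum>x\<in>UNIV. q ^ m * ?P x) - (\<Sum>x\<in>(UNIV :: ('a^'m) set). 1))"
        by (simp only: sum_subtractf sum_distrib_left[symmetric])
      have s2: "(\<Sum>x\<in>UNIV. (q ^ m * ?P x) ^ p) = q ^ (m * p) * (\<Sum>x\<in>UNIV. ?P x ^ p)"
        by (simp add: power_mult_distrib power_mult sum_distrib_left)
      have s3: "(\<Sum>x\<in>UNIV. q ^ m * ?P x) = q ^ m * (\<Sum>x\<in>UNIV. ?P x)"
        by (simp add: sum_distrib_left)
      show ?thesis unfolding s1 s2 s3 one ..
    qed
    also have "\<dots> = q ^ (m * p) * (\<Sum>x\<in>UNIV. ?P x ^ p) - q ^ m" using sP by simp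
    finally have le: "(\<Sum>x\<in>UNIV. \<bar>q ^ m * ?P x - 1\<bar> powr real p) \<le> q ^ (m * p) * (\<Sum>x\<in>UNIV. ?P x ^ p) - q ^ m" .
    have "inner \<le> (1 / q ^ m) * (q ^ (m * p) * (\<Sum>x\<in>UNIV. ?P x ^ p) - q ^ m)"
      unfolding inner_def cardm using le q1 by (intro mult_left_mono) auto
    also have "\<dots> = S C - 1"
    proof -
      have "m * p = m * (p - 1) + m" using p1 by (simp add: algebra_simps)
      then have "q ^ (m * p) = q ^ (m * (p - 1)) * q ^ m" by (simp add: power_add)
      then show ?thesis unfolding S_def PH_def using q1 by (simp add: field_simps)
    qed
    finally have iS: "inner \<le> S C - 1" .
    have "pnorm (real p) (\<lambda>x::'a^'m. q ^ m * ?P x - 1) = inner powr (1 / real p)"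
      unfolding pnorm_def inner_def ..
    also have "\<dots> \<le> (S C - 1) powr (1 / real p)" using iS inner0 by (intro powr_mono2) auto
    finally show ?thesis using iS inner0 by simp
  qed
  show ?thesis
  proof (cases "L = {}")
    case True
    have r1: "0 \<le> real p * \<epsilon> / ((real p - 1) * ln q)" using eps pr lnq by simp
    have r2: "0 \<le> 2 powr (1 - 1 / real p) * ((1 + \<epsilon>) ^ p - 1) powr (1 / real p)" by simp
    show ?thesis using True r1 r2 unfolding L_def by simp
  next
    case False
    have N: "N > 0" unfolding N_def using False finL by (simp add: card_gt_0_iff)
    define A where "A = (\<Sum>C\<in>L. S C) / N"
    have A: "A \<le> (1 + \<epsilon>) ^ (p - 1)" unfolding A_def using EXP N by (simp add: field_simps)
    have A0: "A > 0" unfolding A_def using N Spos finL False by (intro divide_pos_pos sum_pos) auto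
    have part1: "(\<Sum>C\<in>L. renyi_div q (real p) (PH C) (pmf_of_set UNIV)) / N
        \<le> real p * \<epsilon> / ((real p - 1) * ln q)"
    proof -
      have "(\<Sum>C\<in>L. ln (S C)) \<le> N * ln A"
        unfolding N_def A_def using avg_ln[OF finL False, of S] Spos N_def by simp
      also have "ln A \<le> ln ((1 + \<epsilon>) ^ (p - 1))" using A A0 by simp
      also have "\<dots> = real (p - 1) * ln (1 + \<epsilon>)" using eps by (simp add: ln_realpow)
      also have "\<dots> \<le> real (p - 1) * \<epsilon>" using eps by (intro mult_left_mono ln_add_one_self_le_self) auto
      also have "real (p - 1) = real p - 1" using p1 by simp
      finally have sl: "(\<Sum>C\<in>L. ln (S C)) \<le> N * ((real p - 1) * \<epsilon>)" using N by (simp add: mult_left_mono)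
      have "(\<Sum>C\<in>L. renyi_div q (real p) (PH C) (pmf_of_set UNIV)) = (\<Sum>C\<in>L. ln (S C)) / ((real p - 1) * ln q)"
        unfolding Dform by (simp add: sum_divide_distrib)
      also have "\<dots> \<le> N * ((real p - 1) * \<epsilon>) / ((real p - 1) * ln q)"
        using sl pr lnq by (intro divide_right_mono) auto
      also have "\<dots> = N * (\<epsilon> / ln q)"
      proof -
        have ne: "real p - 1 \<noteq> 0" using pr by simp
        have "N * ((real p - 1) * \<epsilon>) / ((real p - 1) * ln q) = (real p - 1) * (N * \<epsilon>) / ((real p - 1) * ln q)"
          by (simp add: mult_ac)
        also have "\<dots> = N * \<epsilon> / ln q" using ne by (rule mult_divide_mult_cancel_left)
        finally show ?thesis by simp
      qed
      finally have "(\<Sum>C\<in>L. renyi_div q (real p) (PH C) (pmf_of_set UNIV)) / N \<le> \<epsilon> / ln q"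
        using N by (simp add: field_simps)
      also have "\<epsilon> / ln q \<le> real p * \<epsilon> / ((real p - 1) * ln q)"
        using eps lnq pr by (simp add: field_simps)
      finally show ?thesis .
    qed
    have part2: "(\<Sum>C\<in>L. pnorm (real p) (\<lambda>x::'a^'m. q ^ m * pmf (PH C) x - 1)) / N
        \<le> 2 powr (1 - 1 / real p) * ((1 + \<epsilon>) ^ p - 1) powr (1 / real p)"
    proof -
      have "(\<Sum>C\<in>L. pnorm (real p) (\<lambda>x::'a^'m. q ^ m * pmf (PH C) x - 1)) \<le> (\<Sum>C\<in>L. (S C - 1) powr (1 / real p))"
        using Sge by (intro sum_mono) auto
      also have "\<dots> \<le> N * ((\<Sum>C\<in>L. S C - 1) / N) powr (1 / real p)"
        unfolding N_def using Sge p1 by (intro avg_powr[OF finL False]) auto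
      also have "(\<Sum>C\<in>L. S C - 1) / N = A - 1"
      proof -
        have "(\<Sum>C\<in>L. S C - 1) = (\<Sum>C\<in>L. S C) - N" unfolding N_def by (simp add: sum_subtractf)
        then show ?thesis unfolding A_def using N by (simp add: diff_divide_distrib)
      qed
      finally have s1: "(\<Sum>C\<in>L. pnorm (real p) (\<lambda>x::'a^'m. q ^ m * pmf (PH C) x - 1)) / N \<le> (A - 1) powr (1 / real p)"
        using N by (simp add: field_simps)
      have A1: "A - 1 \<ge> 0"
      proof -
        have "(\<Sum>C\<in>L. S C - 1) \<ge> 0" using Sge by (intro sum_nonneg) auto
        then have "(\<Sum>C\<in>L. S C) \<ge> N" unfolding N_def by (simp add: sum_subtractf)
        then show ?thesis unfolding A_def using N by (simp add: field_simps)
      qed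
      have "(1 + \<epsilon>) ^ (p - 1) \<le> (1 + \<epsilon>) ^ p" using eps by (intro power_increasing) auto
      then have "A - 1 \<le> (1 + \<epsilon>) ^ p - 1" using A by simp
      then have "(A - 1) powr (1 / real p) \<le> ((1 + \<epsilon>) ^ p - 1) powr (1 / real p)"
        using A1 by (intro powr_mono2) auto
      also have "\<dots> \<le> 2 powr (1 - 1 / real p) * ((1 + \<epsilon>) ^ p - 1) powr (1 / real p)"
      proof -
        have "1 \<le> 2 powr (1 - 1 / real p)" using p1 by (intro ge_one_powr_ge_zero) auto
        then have "1 * ((1 + \<epsilon>) ^ p - 1) powr (1 / real p) \<le> 2 powr (1 - 1 / real p) * ((1 + \<epsilon>) ^ p - 1) powr (1 / real p)"
          by (rule mult_right_mono) simp
        then show ?thesis by simp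
      qed
      finally show ?thesis using s1 by simp
    qed
    show ?thesis using part1 part2 unfolding PH_def L_def N_def by simp
  qed
qed


end
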